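(* Let $f(x)\in R_k[x;\Theta]$ be a monic irreducible divisor of $x^{np^s}-\lambda$ of degree $l$ such that $f(x)^j$ is central and divides $x^{np^s}-\lambda$ ($j\ge1$), and put $\mathcal R=R_k[x;\Theta]/\langle f(x)^j\rangle$. Then every left ideal $\mathcal I$ of $\mathcal R$ (equivalently every skew $(f^j,\Theta)$-polycyclic code of length $lj$ over $R_k$) is of the form \[ \mathcal I=\sum_{i=1}^{k}\mathcal R\Big(u^{i-1}a_i(x)+\sum_{t=1}^{k-i}u^{i-1+t}r_{i,t}(x)\Big), \] where: each $a_i(x)$ is $0$ or belongs to $\mathcal B$; $a_k(x)\mid_r a_i(x)$ for all $1\le i\le k-1$; each $r_{i,t}(x)$ is an element of $\mathbb{F}_{p^m}[x;\theta]/\langle \mu_k(f(x))^j\rangle$ (a polynomial over $\mathbb{F}_{p^m}$ of degree $<lj$); and for each $2\le i\le k$ with $a_i(x)\ne0$, $\max_{1\le t\le i-1}\deg r_{t,i-t}(x)<\deg a_i(x)$. Moreover, the polynomials $r_{i,t}(x)$ satisfying these conditions are unique.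
   Context: $p$ odd prime, $m,k,n,s\ge1$, $\gcd(n,p)=1$, $R_k=\mathbb{F}_{p^m}[u]/\langle u^k\rangle$. $\Theta\in\mathrm{Aut}(R_k)$ whose order divides $np^s$, $\theta=\Theta|_{\mathbb{F}_{p^m}}$; $R_k[x;\Theta]$ is the skew polynomial ring with $xa=\Theta(a)x$, and $\mathbb{F}_{p^m}[x;\theta]$ likewise. $\lambda\in R_k^*$ with $\Theta(\lambda)=\lambda$. $\mu_k:R_k\to\mathbb{F}_{p^m}$, $\sum_{i}a_iu^i\mapsto a_0$, extended coefficientwise to polynomials. $g\mid_r h$ means $h=qg$ for some polynomial $q$. $\mathcal B$ denotes the set of monic divisors of $\mu_k(f(x)^j)$ in $\mathbb{F}_{p^m}[x;\theta]$. *)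

theory Defs
  imports "HOL-Computational_Algebra.Polynomial" "HOL-Algebra.QuotRing"
begin

text \<open>Elements of R_k are represented by their reduced representatives: polynomials
  over the field F (type 'a) in the variable u of degree < k.\<close>

definition rk_mult :: "nat \<Rightarrow> 'a::field poly \<Rightarrow> 'a poly \<Rightarrow> 'a poly" where
  "rk_mult k a b = (a * b) mod ([:0, 1:] ^ k)"

definition Rk :: "nat \<Rightarrow> ('a::field poly) ring" where
  "Rk k = \<lparr>carrier = {a. degree a < k}, mult = rk_mult k, one = 1, zero = 0, add = (+)\<rparr>"

definition skew_mult :: "('b::comm_monoid_add \<Rightarrow> 'b \<Rightarrow> 'b) \<Rightarrow> ('b \<Rightarrow> 'b) \<Rightarrow> 'b poly \<Rightarrow> 'b poly \<Rightarrow> 'b poly" where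
  "skew_mult mul \<sigma> A B =
     (\<Sum>i\<le>degree A. \<Sum>j\<le>degree B. monom (mul (coeff A i) ((\<sigma> ^^ i) (coeff B j))) (i + j))"

definition skewRk :: "nat \<Rightarrow> ('a::field poly \<Rightarrow> 'a poly) \<Rightarrow> ('a poly poly) ring" where
  "skewRk k \<Theta> = \<lparr>carrier = {A. \<forall>i. coeff A i \<in> carrier (Rk k)},
                  mult = skew_mult (rk_mult k) \<Theta>, one = 1, zero = 0, add = (+)\<rparr>"

definition skewF :: "('a::field \<Rightarrow> 'a) \<Rightarrow> ('a poly) ring" where
  "skewF \<theta> = \<lparr>carrier = UNIV, mult = skew_mult (*) \<theta>, one = 1, zero = 0, add = (+)\<rparr>"

definition rdvd :: "('a, 'm) ring_scheme \<Rightarrow> 'a \<Rightarrow> 'a \<Rightarrow> bool" where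
  "rdvd R g h \<longleftrightarrow> (\<exists>q \<in> carrier R. h = q \<otimes>\<^bsub>R\<^esub> g)"

definition skew_irreducible :: "('a, 'm) ring_scheme \<Rightarrow> 'a \<Rightarrow> bool" where
  "skew_irreducible R f \<longleftrightarrow> f \<in> carrier R \<and> f \<notin> Units R \<and>
     (\<forall>g \<in> carrier R. \<forall>h \<in> carrier R. f = g \<otimes>\<^bsub>R\<^esub> h \<longrightarrow> g \<in> Units R \<or> h \<in> Units R)"

definition central :: "('a, 'm) ring_scheme \<Rightarrow> 'a \<Rightarrow> bool" where
  "central R a \<longleftrightarrow> a \<in> carrier R \<and> (\<forall>b \<in> carrier R. a \<otimes>\<^bsub>R\<^esub> b = b \<otimes>\<^bsub>R\<^esub> a)"

definition left_ideal :: "'a set \<Rightarrow> ('a, 'm) ring_scheme \<Rightarrow> bool" where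
  "left_ideal I R \<longleftrightarrow> additive_subgroup I R \<and> (\<forall>a \<in> carrier R. \<forall>x \<in> I. a \<otimes>\<^bsub>R\<^esub> x \<in> I)"

definition left_gen :: "('a, 'm) ring_scheme \<Rightarrow> (nat \<Rightarrow> 'a) \<Rightarrow> nat set \<Rightarrow> 'a set" where
  "left_gen R g A = {finsum R (\<lambda>i. c i \<otimes>\<^bsub>R\<^esub> g i) A | c. c \<in> A \<rightarrow> carrier R}"

definition mu :: "'a::field poly poly \<Rightarrow> 'a poly" where
  "mu A = map_poly (\<lambda>c. coeff c 0) A"

definition emb :: "'a::field poly \<Rightarrow> 'a poly poly" where
  "emb a = map_poly (\<lambda>c. [:c:]) a"

definition gen_poly :: "nat \<Rightarrow> ('a::field poly \<Rightarrow> 'a poly) \<Rightarrow> (nat \<Rightarrow> 'a poly)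
    \<Rightarrow> (nat \<Rightarrow> nat \<Rightarrow> 'a poly) \<Rightarrow> nat \<Rightarrow> 'a poly poly" where
  "gen_poly k \<Theta> a r i =
     [:[:0, 1:] ^ (i - 1):] \<otimes>\<^bsub>skewRk k \<Theta>\<^esub> emb (a i)
     + (\<Sum>t\<in>{1..k - i}. [:[:0, 1:] ^ (i - 1 + t):] \<otimes>\<^bsub>skewRk k \<Theta>\<^esub> emb (r i t))"

text \<open>The side conditions of the theorem on the families a_i, r_{i,t}
  (B = monic right divisors of \<mu>_k(f^j) in F[x;\<theta>]).\<close>
definition rep_conds :: "nat \<Rightarrow> ('a::field \<Rightarrow> 'a) \<Rightarrow> 'a poly poly \<Rightarrow> nat \<Rightarrow> nat
    \<Rightarrow> (nat \<Rightarrow> 'a poly) \<Rightarrow> (nat \<Rightarrow> nat \<Rightarrow> 'a poly) \<Rightarrow> bool" where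
  "rep_conds k \<theta> Fj l j a r \<longleftrightarrow>
     (\<forall>i\<in>{1..k}. a i = 0 \<or> (lead_coeff (a i) = 1 \<and> rdvd (skewF \<theta>) (a i) (mu Fj))) \<and>
     (\<forall>i\<in>{1..k - 1}. rdvd (skewF \<theta>) (a k) (a i)) \<and>
     (\<forall>i\<in>{1..k}. \<forall>t\<in>{1..k - i}. degree (r i t) < l * j) \<and>
     (\<forall>i\<in>{2..k}. a i \<noteq> 0 \<longrightarrow>
        (\<forall>t\<in>{1..i - 1}. r t (i - t) = 0 \<or> degree (r t (i - t)) < degree (a i)))"

end

theory Submission
  imports Defs
begin

section \<open>Generic skew polynomial rings\<close>

locale skew_base =
  fixes C :: "'b::comm_ring_1 set" and mul :: "'b \<Rightarrow> 'b \<Rightarrow> 'b" and \<sigma> :: "'b \<Rightarrow> 'b"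
  assumes R_ring: "ring \<lparr>carrier = C, mult = mul, one = 1, zero = 0, add = (+)\<rparr>"
  and \<sigma>_hom: "\<sigma> \<in> ring_hom \<lparr>carrier = C, mult = mul, one = 1, zero = 0, add = (+)\<rparr>
                         \<lparr>carrier = C, mult = mul, one = 1, zero = 0, add = (+)\<rparr>"
begin

abbreviation "R0 \<equiv> \<lparr>carrier = C, mult = mul, one = 1, zero = 0, add = (+)\<rparr>"

lemma C0: "0 \<in> C" using ring.ring_simprules(2)[OF R_ring] by simp
lemma C1: "1 \<in> C" using ring.ring_simprules(6)[OF R_ring] by simp
lemma Cadd: "x \<in> C \<Longrightarrow> y \<in> C \<Longrightarrow> x + y \<in> C" using ring.ring_simprules(1)[OF R_ring] by simp
lemma Cmul: "x \<in> C \<Longrightarrow> y \<in> C \<Longrightarrow> mul x y \<in> C" using ring.ring_simprules(5)[OF R_ring] by simp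
lemma Cuminus: assumes "x \<in> C" shows "- x \<in> C"
proof -
  interpret r: ring R0 by (rule R_ring)
  obtain y where "y \<in> C" "y + x = 0" using r.add.l_inv_ex[of x] assms by auto
  then have "y = - x" by (simp add: eq_neg_iff_add_eq_0 add.commute)
  then show ?thesis using \<open>y \<in> C\<close> by simp
qed
lemma Cdiff: "x \<in> C \<Longrightarrow> y \<in> C \<Longrightarrow> x - y \<in> C" using Cadd Cuminus by (metis diff_conv_add_uminus)
lemma mul_assoc: "x \<in> C \<Longrightarrow> y \<in> C \<Longrightarrow> z \<in> C \<Longrightarrow> mul (mul x y) z = mul x (mul y z)"
  using ring.ring_simprules(11)[OF R_ring] by simp
lemma mul_ldistr: "x \<in> C \<Longrightarrow> y \<in> C \<Longrightarrow> z \<in> C \<Longrightarrow> mul (x + y) z = mul x z + mul y z"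
  using ring.ring_simprules(13)[OF R_ring] by simp
lemma mul_rdistr: "x \<in> C \<Longrightarrow> y \<in> C \<Longrightarrow> z \<in> C \<Longrightarrow> mul z (x + y) = mul z x + mul z y"
  using ring.ring_simprules(23)[OF R_ring] by simp
lemma mul_1l: "x \<in> C \<Longrightarrow> mul 1 x = x"
proof - interpret r: ring R0 by (rule R_ring) show "x \<in> C \<Longrightarrow> mul 1 x = x" using r.l_one[of x] by simp qed
lemma mul_1r: "x \<in> C \<Longrightarrow> mul x 1 = x"
proof - interpret r: ring R0 by (rule R_ring) show "x \<in> C \<Longrightarrow> mul x 1 = x" using r.r_one[of x] by simp qed
lemma mul_0l: "x \<in> C \<Longrightarrow> mul 0 x = 0"
proof - interpret r: ring R0 by (rule R_ring) show "x \<in> C \<Longrightarrow> mul 0 x = 0" using r.l_null[of x] by simp qed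
lemma mul_0r: "x \<in> C \<Longrightarrow> mul x 0 = 0"
proof - interpret r: ring R0 by (rule R_ring) show "x \<in> C \<Longrightarrow> mul x 0 = 0" using r.r_null[of x] by simp qed

lemma Csum: "finite S \<Longrightarrow> (\<And>i. i \<in> S \<Longrightarrow> f i \<in> C) \<Longrightarrow> (\<Sum>i\<in>S. f i) \<in> C"
  by (induction S rule: finite_induct) (auto simp: C0 Cadd)

lemma mul_sum_l: "finite S \<Longrightarrow> (\<And>i. i \<in> S \<Longrightarrow> f i \<in> C) \<Longrightarrow> y \<in> C \<Longrightarrow> mul (\<Sum>i\<in>S. f i) y = (\<Sum>i\<in>S. mul (f i) y)"
proof (induction S rule: finite_induct)
  case empty then show ?case by (simp add: mul_0l)
next
  case (insert x F)
  have "(\<Sum>i\<in>F. f i) \<in> C" using insert by (intro Csum) auto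
  then show ?case using insert by (simp add: mul_ldistr)
qed

lemma mul_sum_r: "finite S \<Longrightarrow> (\<And>i. i \<in> S \<Longrightarrow> f i \<in> C) \<Longrightarrow> y \<in> C \<Longrightarrow> mul y (\<Sum>i\<in>S. f i) = (\<Sum>i\<in>S. mul y (f i))"
proof (induction S rule: finite_induct)
  case empty then show ?case by (simp add: mul_0r)
next
  case (insert x F)
  have "(\<Sum>i\<in>F. f i) \<in> C" using insert by (intro Csum) auto
  then show ?case using insert by (simp add: mul_rdistr)
qed

lemma \<sigma>C: "x \<in> C \<Longrightarrow> \<sigma> x \<in> C" using ring_hom_closed[OF \<sigma>_hom] by simp
lemma \<sigma>_add: "x \<in> C \<Longrightarrow> y \<in> C \<Longrightarrow> \<sigma> (x + y) = \<sigma> x + \<sigma> y" using ring_hom_add[OF \<sigma>_hom] by simp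
lemma \<sigma>_mul: "x \<in> C \<Longrightarrow> y \<in> C \<Longrightarrow> \<sigma> (mul x y) = mul (\<sigma> x) (\<sigma> y)" using ring_hom_mult[OF \<sigma>_hom] by simp
lemma \<sigma>_one: "\<sigma> 1 = 1" using ring_hom_one[OF \<sigma>_hom] by simp
lemma \<sigma>_zero: "\<sigma> 0 = 0" using \<sigma>_add[OF C0 C0] by simp

lemma \<sigma>pC: "x \<in> C \<Longrightarrow> (\<sigma>^^i) x \<in> C" by (induction i) (auto simp: \<sigma>C)
lemma \<sigma>p_add: "x \<in> C \<Longrightarrow> y \<in> C \<Longrightarrow> (\<sigma>^^i) (x + y) = (\<sigma>^^i) x + (\<sigma>^^i) y"
  by (induction i) (auto simp: \<sigma>_add \<sigma>pC)
lemma \<sigma>p_mul: "x \<in> C \<Longrightarrow> y \<in> C \<Longrightarrow> (\<sigma>^^i) (mul x y) = mul ((\<sigma>^^i) x) ((\<sigma>^^i) y)"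
  by (induction i) (auto simp: \<sigma>_mul \<sigma>pC)
lemma \<sigma>p_one: "(\<sigma>^^i) 1 = 1" by (induction i) (auto simp: \<sigma>_one)
lemma \<sigma>p_zero: "(\<sigma>^^i) 0 = 0" by (induction i) (auto simp: \<sigma>_zero)
lemma \<sigma>p_sum: "finite S \<Longrightarrow> (\<And>i. i \<in> S \<Longrightarrow> f i \<in> C) \<Longrightarrow> (\<sigma>^^n) (\<Sum>i\<in>S. f i) = (\<Sum>i\<in>S. (\<sigma>^^n) (f i))"
proof (induction S rule: finite_induct)
  case empty then show ?case by (simp add: \<sigma>p_zero)
next
  case (insert x F)
  have "(\<Sum>i\<in>F. f i) \<in> C" using insert by (intro Csum) auto
  then show ?case using insert by (simp add: \<sigma>p_add)
qed
lemma \<sigma>p_comp: "(\<sigma>^^i) ((\<sigma>^^j) x) = (\<sigma>^^(i+j)) x" by (simp add: funpow_add)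

definition SC :: "'b poly set" where "SC = {A. \<forall>i. coeff A i \<in> C}"

lemma SC_coeff: "A \<in> SC \<Longrightarrow> coeff A i \<in> C" by (simp add: SC_def)

lemma coeff_skew:
  assumes A: "A \<in> SC" and B: "B \<in> SC"
  shows "coeff (skew_mult mul \<sigma> A B) n = (\<Sum>i\<le>n. mul (coeff A i) ((\<sigma>^^i) (coeff B (n-i))))"
proof -
  define g where "g i j = mul (coeff A i) ((\<sigma>^^i) (coeff B j))" for i j
  have g0: "g i j = 0" if "i > degree A \<or> j > degree B" for i j
    using that A B by (auto simp: g_def coeff_eq_0 \<sigma>p_zero mul_0l mul_0r \<sigma>pC SC_coeff)
  have "coeff (skew_mult mul \<sigma> A B) n = (\<Sum>i\<le>degree A. \<Sum>j\<le>degree B. if i + j = n then g i j else 0)"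
    unfolding g_def by (simp add: skew_mult_def coeff_sum coeff_monom eq_commute)
  also have "\<dots> = (\<Sum>i\<le>degree A. if i \<le> n then g i (n - i) else 0)"
  proof (rule sum.cong[OF refl])
    fix i
    show "(\<Sum>j\<le>degree B. if i + j = n then g i j else 0) = (if i \<le> n then g i (n - i) else 0)"
    proof (cases "i \<le> n")
      case True
      then have "(\<Sum>j\<le>degree B. if i + j = n then g i j else 0) = (\<Sum>j\<le>degree B. if j = n - i then g i j else 0)"
        by (intro sum.cong) auto
      also have "\<dots> = (if n - i \<in> {..degree B} then g i (n - i) else 0)" by (rule sum.delta) simp
      also have "\<dots> = g i (n - i)" using g0[of i "n - i"] by auto
      finally show ?thesis using True by simp
    qed auto
  qed
  also have "\<dots> = (\<Sum>i\<le>n. g i (n - i))"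
  proof -
    have "(\<Sum>i\<le>degree A. if i \<le> n then g i (n - i) else 0) = (\<Sum>i\<le>max n (degree A). if i \<le> n then g i (n - i) else 0)"
      by (rule sum.mono_neutral_left) (auto simp: g0)
    also have "\<dots> = (\<Sum>i\<le>n. g i (n - i))"
      by (rule sum.mono_neutral_cong_right) auto
    finally show ?thesis .
  qed
  finally show ?thesis by (simp add: g_def)
qed

lemma SC_add: "A \<in> SC \<Longrightarrow> B \<in> SC \<Longrightarrow> A + B \<in> SC" by (simp add: SC_def Cadd)
lemma SC_uminus: "A \<in> SC \<Longrightarrow> - A \<in> SC" by (simp add: SC_def Cuminus)
lemma SC_diff: "A \<in> SC \<Longrightarrow> B \<in> SC \<Longrightarrow> A - B \<in> SC" by (simp add: SC_def Cdiff)
lemma SC_0: "0 \<in> SC" by (simp add: SC_def C0)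
lemma SC_1: "1 \<in> SC" by (simp add: SC_def C0 C1 coeff_1)
lemma SC_mul: "A \<in> SC \<Longrightarrow> B \<in> SC \<Longrightarrow> skew_mult mul \<sigma> A B \<in> SC"
  by (subst SC_def) (auto simp: coeff_skew intro!: Csum Cmul \<sigma>pC SC_coeff)

lemma skew_assoc:
  assumes A: "A \<in> SC" and B: "B \<in> SC" and Cc: "D \<in> SC"
  shows "skew_mult mul \<sigma> (skew_mult mul \<sigma> A B) D = skew_mult mul \<sigma> A (skew_mult mul \<sigma> B D)"
proof (rule poly_eqI)
  fix n
  let ?a = "coeff A" and ?b = "coeff B" and ?c = "coeff D"
  define h where "h i j = mul (mul (?a i) ((\<sigma>^^i) (?b j))) ((\<sigma>^^(i+j)) (?c (n - i - j)))" for i j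
  have aC: "?a i \<in> C" "?b i \<in> C" "?c i \<in> C" for i using A B Cc by (auto simp: SC_coeff)
  have "coeff (skew_mult mul \<sigma> (skew_mult mul \<sigma> A B) D) n
      = (\<Sum>m\<le>n. mul (\<Sum>i\<le>m. mul (?a i) ((\<sigma>^^i) (?b (m-i)))) ((\<sigma>^^m) (?c (n-m))))"
    using A B Cc by (simp add: coeff_skew SC_mul)
  also have "\<dots> = (\<Sum>m\<le>n. \<Sum>i\<le>m. h i (m - i))"
  proof (rule sum.cong[OF refl])
    fix m assume m: "m \<in> {..n}"
    have "mul (\<Sum>i\<le>m. mul (?a i) ((\<sigma>^^i) (?b (m-i)))) ((\<sigma>^^m) (?c (n-m)))
        = (\<Sum>i\<le>m. mul (mul (?a i) ((\<sigma>^^i) (?b (m-i)))) ((\<sigma>^^m) (?c (n-m))))"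
      by (rule mul_sum_l) (auto intro: Cmul \<sigma>pC aC)
    also have "\<dots> = (\<Sum>i\<le>m. h i (m - i))"
      by (rule sum.cong[OF refl]) (auto simp: h_def)
    finally show "mul (\<Sum>i\<le>m. mul (?a i) ((\<sigma>^^i) (?b (m-i)))) ((\<sigma>^^m) (?c (n-m))) = (\<Sum>i\<le>m. h i (m - i))" .
  qed
  also have "\<dots> = (\<Sum>(i,j)\<in>{(i,j). i + j \<le> n}. h i j)"
    by (rule sum.triangle_reindex_eq[symmetric])
  also have "\<dots> = (\<Sum>i\<le>n. \<Sum>j\<le>n-i. h i j)"
  proof -
    have "{(i,j). i + j \<le> n} = Sigma {..n} (\<lambda>i. {..n-i})" by auto
    then show ?thesis by (simp add: sum.Sigma)
  qed
  also have "\<dots> = (\<Sum>i\<le>n. mul (?a i) ((\<sigma>^^i) (\<Sum>j\<le>n-i. mul (?b j) ((\<sigma>^^j) (?c (n-i-j))))))"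
  proof (rule sum.cong[OF refl])
    fix i assume i: "i \<in> {..n}"
    have "(\<sigma>^^i) (\<Sum>j\<le>n-i. mul (?b j) ((\<sigma>^^j) (?c (n-i-j))))
       = (\<Sum>j\<le>n-i. (\<sigma>^^i) (mul (?b j) ((\<sigma>^^j) (?c (n-i-j)))))"
      by (rule \<sigma>p_sum) (auto intro: Cmul \<sigma>pC aC)
    also have "\<dots> = (\<Sum>j\<le>n-i. mul ((\<sigma>^^i) (?b j)) ((\<sigma>^^(i+j)) (?c (n-i-j))))"
      by (rule sum.cong[OF refl]) (simp add: \<sigma>p_mul \<sigma>pC aC \<sigma>p_comp)
    finally have e: "(\<sigma>^^i) (\<Sum>j\<le>n-i. mul (?b j) ((\<sigma>^^j) (?c (n-i-j))))
       = (\<Sum>j\<le>n-i. mul ((\<sigma>^^i) (?b j)) ((\<sigma>^^(i+j)) (?c (n-i-j))))" .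
    have "mul (?a i) (\<Sum>j\<le>n-i. mul ((\<sigma>^^i) (?b j)) ((\<sigma>^^(i+j)) (?c (n-i-j))))
        = (\<Sum>j\<le>n-i. mul (?a i) (mul ((\<sigma>^^i) (?b j)) ((\<sigma>^^(i+j)) (?c (n-i-j)))))"
      by (rule mul_sum_r) (auto intro: Cmul \<sigma>pC aC)
    also have "\<dots> = (\<Sum>j\<le>n-i. h i j)"
      by (rule sum.cong[OF refl]) (simp add: h_def mul_assoc \<sigma>pC aC)
    finally show "(\<Sum>j\<le>n-i. h i j) = mul (?a i) ((\<sigma>^^i) (\<Sum>j\<le>n-i. mul (?b j) ((\<sigma>^^j) (?c (n-i-j)))))"
      using e by simp
  qed
  also have "\<dots> = coeff (skew_mult mul \<sigma> A (skew_mult mul \<sigma> B D)) n"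
    using A B Cc by (simp add: coeff_skew SC_mul)
  finally show "coeff (skew_mult mul \<sigma> (skew_mult mul \<sigma> A B) D) n = coeff (skew_mult mul \<sigma> A (skew_mult mul \<sigma> B D)) n" .
qed

lemma skew_one_l: "A \<in> SC \<Longrightarrow> skew_mult mul \<sigma> 1 A = A"
proof (rule poly_eqI)
  fix n assume A: "A \<in> SC"
  have e: "mul (of_bool (i = 0)) ((\<sigma>^^i) (coeff A (n-i))) = (if i = 0 then coeff A (n - i) else 0)" for i
    using A by (auto simp: mul_0l mul_1l \<sigma>pC SC_coeff)
  have "coeff (skew_mult mul \<sigma> 1 A) n = (\<Sum>i\<le>n. if i = 0 then coeff A (n - i) else 0)"
    using A SC_1 by (simp add: coeff_skew coeff_1 e)
  then show "coeff (skew_mult mul \<sigma> 1 A) n = coeff A n" by (simp add: sum.delta)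
qed

lemma skew_one_r: "A \<in> SC \<Longrightarrow> skew_mult mul \<sigma> A 1 = A"
proof (rule poly_eqI)
  fix n assume A: "A \<in> SC"
  have e: "mul (coeff A i) ((\<sigma>^^i) (of_bool (n = i))) = (if i = n then coeff A i else 0)" for i
    using A by (auto simp: mul_0r mul_1r \<sigma>p_zero \<sigma>p_one SC_coeff)
  have "coeff (skew_mult mul \<sigma> A 1) n = (\<Sum>i\<le>n. if i = n then coeff A i else 0)"
    using A SC_1 by (simp add: coeff_skew coeff_1 e)
  then show "coeff (skew_mult mul \<sigma> A 1) n = coeff A n" by (simp add: sum.delta')
qed

lemma skew_distr_l: "A \<in> SC \<Longrightarrow> B \<in> SC \<Longrightarrow> D \<in> SC \<Longrightarrow>
   skew_mult mul \<sigma> (A + B) D = skew_mult mul \<sigma> A D + skew_mult mul \<sigma> B D"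
  by (rule poly_eqI) (simp add: coeff_skew SC_add SC_coeff mul_ldistr \<sigma>pC sum.distrib[symmetric])

lemma skew_distr_r: "A \<in> SC \<Longrightarrow> B \<in> SC \<Longrightarrow> D \<in> SC \<Longrightarrow>
   skew_mult mul \<sigma> D (A + B) = skew_mult mul \<sigma> D A + skew_mult mul \<sigma> D B"
  by (rule poly_eqI) (simp add: coeff_skew SC_add SC_coeff mul_rdistr \<sigma>pC \<sigma>p_add sum.distrib[symmetric])

lemma skew_ring: "ring \<lparr>carrier = {A. \<forall>i. coeff A i \<in> C}, mult = skew_mult mul \<sigma>, one = 1, zero = 0, add = (+)\<rparr>"
proof -
  have SCe: "{A. \<forall>i. coeff A i \<in> C} = SC" by (simp add: SC_def)
  show ?thesis unfolding SCe
  proof (rule ringI)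
    show "abelian_group \<lparr>carrier = SC, mult = skew_mult mul \<sigma>, one = 1, zero = 0, add = (+)\<rparr>"
      by (rule abelian_groupI) (auto simp: SC_add SC_0 intro!: bexI[of _ "- _"] SC_uminus)
    show "monoid \<lparr>carrier = SC, mult = skew_mult mul \<sigma>, one = 1, zero = 0, add = (+)\<rparr>"
      by (rule monoidI) (auto simp: SC_mul SC_1 skew_assoc skew_one_l skew_one_r)
  qed (auto simp: skew_distr_l skew_distr_r)
qed

lemma coeff_skew_high:
  assumes A: "A \<in> SC" and B: "B \<in> SC" and n: "n > degree A + degree B"
  shows "coeff (skew_mult mul \<sigma> A B) n = 0"
proof -
  have "mul (coeff A i) ((\<sigma>^^i) (coeff B (n-i))) = 0" for i
  proof (cases "i > degree A")
    case True then show ?thesis using B by (simp add: coeff_eq_0 mul_0l \<sigma>pC SC_coeff)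
  next
    case False then have "n - i > degree B" using n by auto
    then show ?thesis using A by (simp add: coeff_eq_0 mul_0r \<sigma>p_zero SC_coeff)
  qed
  then show ?thesis using A B by (simp add: coeff_skew)
qed

lemma coeff_skew_top:
  assumes A: "A \<in> SC" and B: "B \<in> SC"
  shows "coeff (skew_mult mul \<sigma> A B) (degree A + degree B) = mul (lead_coeff A) ((\<sigma>^^degree A) (lead_coeff B))"
proof -
  let ?n = "degree A + degree B"
  have "mul (coeff A i) ((\<sigma>^^i) (coeff B (?n-i))) = (if i = degree A then mul (lead_coeff A) ((\<sigma>^^degree A) (lead_coeff B)) else 0)" for i
  proof (cases "i > degree A")
    case True then show ?thesis using B by (simp add: coeff_eq_0 mul_0l \<sigma>pC SC_coeff)
  next
    case False
    show ?thesis
    proof (cases "i = degree A")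
      case False then have "?n - i > degree B" using \<open>\<not> i > degree A\<close> by auto
      then show ?thesis using A False by (simp add: coeff_eq_0 mul_0r \<sigma>p_zero SC_coeff)
    qed simp
  qed
  then show ?thesis using A B by (simp add: coeff_skew sum.delta')
qed

lemma degree_skew_le:
  assumes A: "A \<in> SC" and B: "B \<in> SC"
  shows "degree (skew_mult mul \<sigma> A B) \<le> degree A + degree B"
  by (rule degree_le) (auto intro: coeff_skew_high[OF A B])

lemma degree_skew_eq:
  assumes A: "A \<in> SC" and B: "B \<in> SC" and nz: "mul (lead_coeff A) ((\<sigma>^^degree A) (lead_coeff B)) \<noteq> 0"
  shows "degree (skew_mult mul \<sigma> A B) = degree A + degree B"
    and "lead_coeff (skew_mult mul \<sigma> A B) = mul (lead_coeff A) ((\<sigma>^^degree A) (lead_coeff B))"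
proof -
  show d: "degree (skew_mult mul \<sigma> A B) = degree A + degree B"
    using degree_skew_le[OF A B] coeff_skew_top[OF A B] nz
    by (metis le_antisym le_degree)
  show "lead_coeff (skew_mult mul \<sigma> A B) = mul (lead_coeff A) ((\<sigma>^^degree A) (lead_coeff B))"
    using d coeff_skew_top[OF A B] by simp
qed

lemma coeff_skew_const_l:
  assumes c: "c \<in> C" and B: "B \<in> SC"
  shows "coeff (skew_mult mul \<sigma> [:c:] B) n = mul c (coeff B n)"
proof -
  have "[:c:] \<in> SC" using c C0 by (auto simp: SC_def coeff_pCons split: nat.split)
  moreover have "mul (coeff [:c:] i) ((\<sigma>^^i) (coeff B (n-i))) = (if i = 0 then mul c (coeff B n) else 0)" for i
    using B by (cases i) (auto simp: mul_0l \<sigma>pC \<sigma>C SC_coeff)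
  ultimately show ?thesis using B by (simp add: coeff_skew sum.delta)
qed

lemma coeff_skew_const_r:
  assumes c: "c \<in> C" and B: "B \<in> SC"
  shows "coeff (skew_mult mul \<sigma> B [:c:]) n = mul (coeff B n) ((\<sigma>^^n) c)"
proof -
  have "[:c:] \<in> SC" using c C0 by (auto simp: SC_def coeff_pCons split: nat.split)
  moreover have "mul (coeff B i) ((\<sigma>^^i) (coeff [:c:] (n-i))) = (if i = n then mul (coeff B n) ((\<sigma>^^n) c) else 0)" if "i \<le> n" for i
    using B that by (auto simp: mul_0r \<sigma>p_zero SC_coeff coeff_pCons split: nat.split)
  ultimately show ?thesis using B by (simp add: coeff_skew sum.delta')
qed

lemma coeff_skew_monom_l:
  assumes c: "c \<in> C" and B: "B \<in> SC"
  shows "coeff (skew_mult mul \<sigma> (monom c d) B) n = (if d \<le> n then mul c ((\<sigma>^^d) (coeff B (n - d))) else 0)"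
proof -
  have "monom c d \<in> SC" using c C0 by (auto simp: SC_def coeff_monom)
  moreover have "mul (coeff (monom c d) i) ((\<sigma>^^i) (coeff B (n-i))) = (if i = d then mul c ((\<sigma>^^d) (coeff B (n - d))) else 0)" for i
    using B by (auto simp: mul_0l \<sigma>pC SC_coeff coeff_monom)
  ultimately show ?thesis using B by (simp add: coeff_skew sum.delta)
qed

end

section \<open>The ring R_k\<close>

lemma Rk_carrier: "carrier (Rk k) = {a. degree a < k}" by (simp add: Rk_def)
lemma Rk_mult: "mult (Rk k) = rk_mult k" by (simp add: Rk_def)

lemma degree_upow: "degree ([:0, 1:] ^ k :: 'a::field poly) = k"
  using degree_linear_power[of 0 k] by simp

lemma upow_nz: "([:0, 1:] ^ k :: 'a::field poly) \<noteq> 0" by simp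

lemma rk_mod_id: "degree (a::'a::field poly) < k \<Longrightarrow> a mod [:0, 1:] ^ k = a"
  by (rule mod_poly_less) (simp add: degree_upow)

lemma rk_mult_closed: "k \<ge> 1 \<Longrightarrow> degree (rk_mult k (a::'a::field poly) b) < k"
  using degree_mod_less[OF upow_nz, of "a * b" k] by (auto simp: rk_mult_def degree_upow)

lemma rk_mult_assoc: "rk_mult k (rk_mult k a b) c = rk_mult k a (rk_mult k b c)"
  by (simp add: rk_mult_def mod_mult_left_eq mod_mult_right_eq mult.assoc)

lemma rk_mult_comm: "rk_mult k a b = rk_mult k b a"
  by (simp add: rk_mult_def mult.commute)

lemma rk_mult_add: "rk_mult k (a + b) c = rk_mult k a c + rk_mult k b c"
  by (simp add: rk_mult_def distrib_right poly_mod_add_left)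

lemma rk_mult_1: "degree a < k \<Longrightarrow> rk_mult k 1 a = a" by (simp add: rk_mult_def rk_mod_id)
lemma rk_mult_1r: "degree a < k \<Longrightarrow> rk_mult k a 1 = a" by (simp add: rk_mult_def rk_mod_id)
lemma rk_mult_0: "rk_mult k 0 a = 0" "rk_mult k a 0 = 0" by (simp_all add: rk_mult_def)

lemma Rk_cring: assumes "k \<ge> 1" shows "cring (Rk k)"
proof (rule cringI)
  show "abelian_group (Rk k)"
    by (rule abelian_groupI) (use assms in \<open>auto simp: Rk_def degree_add_less intro!: exI[of _ "- _"]\<close>)
  show "comm_monoid (Rk k)"
    by (rule comm_monoidI) (use assms in \<open>auto simp: Rk_def rk_mult_closed rk_mult_assoc rk_mult_1 intro: rk_mult_comm\<close>)
qed (simp add: Rk_def rk_mult_add)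

lemma Rk_ring: "k \<ge> 1 \<Longrightarrow> ring (Rk k)" using Rk_cring cring.axioms(1) by blast


lemma coeff0_upow_mult: "k \<ge> 1 \<Longrightarrow> coeff ([:0, 1:] ^ k * x :: 'a::field poly) 0 = 0"
  by (simp add: coeff_mult_0 coeff_0_power)

lemma coeff0_mod: "k \<ge> 1 \<Longrightarrow> coeff (p mod [:0, 1:] ^ k :: 'a::field poly) 0 = coeff p 0"
proof -
  assume k: "k \<ge> 1"
  have "p mod [:0, 1:] ^ k = p - [:0, 1:] ^ k * (p div [:0, 1:] ^ k)"
    by (simp add: minus_div_mult_eq_mod[symmetric] mult.commute)
  then show ?thesis using coeff0_upow_mult[OF k] by simp
qed

lemma coeff0_rk: "k \<ge> 1 \<Longrightarrow> coeff (rk_mult k a b) 0 = coeff a 0 * coeff b 0"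
  by (simp add: rk_mult_def coeff0_mod coeff_mult_0)

lemma dvd_mod_upow:
  assumes "w \<le> k" "[:0, 1:] ^ w dvd (p :: 'a::field poly)"
  shows "[:0, 1:] ^ w dvd p mod [:0, 1:] ^ k"
proof -
  have "p mod [:0, 1:] ^ k = p - [:0, 1:] ^ k * (p div [:0, 1:] ^ k)"
    by (simp add: minus_div_mult_eq_mod[symmetric] mult.commute)
  moreover have "[:0, 1:] ^ w dvd ([:0, 1:] ^ k :: 'a poly)" using assms(1) by (rule le_imp_power_dvd)
  ultimately show ?thesis using assms(2) by (metis dvd_diff dvd_mult2)
qed

lemma dvd_rk:
  assumes "w + v \<le> k" "[:0, 1:] ^ w dvd (a :: 'a::field poly)" "[:0, 1:] ^ v dvd b"
  shows "[:0, 1:] ^ (w + v) dvd rk_mult k a b"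
  unfolding rk_mult_def using assms by (intro dvd_mod_upow) (auto simp: power_add mult_dvd_mono)

lemma upow_dvd_iff: "([:0, 1:] ^ w :: 'a::field poly) dvd p \<longleftrightarrow> (\<forall>i<w. coeff p i = 0)"
  using monom_1_dvd_iff'[of w p] by (simp add: monom_altdef)

lemma finite_Rk: "finite {a :: 'a::{field,finite} poly. degree a < k}"
proof -
  have "{a :: 'a poly. degree a < k} \<subseteq> Poly ` {xs. set xs \<subseteq> UNIV \<and> length xs \<le> k}"
  proof
    fix a :: "'a poly" assume "a \<in> {a. degree a < k}"
    then have "length (coeffs a) \<le> k" by (cases "a = 0") (auto simp: length_coeffs_degree)
    then show "a \<in> Poly ` {xs. set xs \<subseteq> UNIV \<and> length xs \<le> k}" by (intro image_eqI[of _ _ "coeffs a"]) auto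
  qed
  moreover have "finite {xs :: 'a list. set xs \<subseteq> UNIV \<and> length xs \<le> k}" by (rule finite_lists_length_le) simp
  ultimately show ?thesis by (rule finite_subset[OF _ finite_imageI])
qed

context
  fixes k :: nat and \<psi> :: "'a::field poly \<Rightarrow> 'a poly"
  assumes k1: "k \<ge> 1" and \<psi>hom: "\<psi> \<in> ring_hom (Rk k) (Rk k)"
begin

lemma \<psi>_closed: "degree a < k \<Longrightarrow> degree (\<psi> a) < k"
  using ring_hom_closed[OF \<psi>hom] by (simp add: Rk_def)
lemma \<psi>_mult: "degree a < k \<Longrightarrow> degree b < k \<Longrightarrow> \<psi> (rk_mult k a b) = rk_mult k (\<psi> a) (\<psi> b)"
  using ring_hom_mult[OF \<psi>hom] by (simp add: Rk_def)
lemma \<psi>_add: "degree a < k \<Longrightarrow> degree b < k \<Longrightarrow> \<psi> (a + b) = \<psi> a + \<psi> b"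
  using ring_hom_add[OF \<psi>hom] by (simp add: Rk_def)
lemma \<psi>_one: "\<psi> 1 = 1"
  using ring_hom_one[OF \<psi>hom] by (simp add: Rk_def)
lemma \<psi>_zero: "\<psi> 0 = 0"
  using \<psi>_add[of 0 0] k1 by (metis add_cancel_right_right degree_0 less_le_trans zero_less_one)

lemma rk_upow: "w + v < k \<Longrightarrow> rk_mult k ([:0, 1:] ^ w) ([:0, 1:] ^ v) = ([:0, 1:] ^ (w + v) :: 'a poly)"
proof -
  assume "w + v < k"
  then have "degree ([:0, 1:] ^ (w + v) :: 'a poly) < k" by (simp add: degree_upow)
  then show ?thesis unfolding rk_mult_def power_add[symmetric] by (rule rk_mod_id)
qed

lemma \<psi>_u_coeff0: assumes k2: "k \<ge> 2" shows "coeff (\<psi> [:0, 1:]) 0 = 0"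
proof -
  define c where "c = coeff (\<psi> [:0, 1:]) 0"
  have u: "degree ([:0, 1:] :: 'a poly) < k" using k2 by simp
  have pw: "coeff (\<psi> ([:0, 1:] ^ w)) 0 = c ^ w" if "w < k" for w
    using that
  proof (induction w)
    case 0 then show ?case by (simp add: \<psi>_one)
  next
    case (Suc w)
    have "[:0, 1:] ^ Suc w = rk_mult k [:0, 1:] ([:0, 1:] ^ w :: 'a poly)"
      using rk_upow[of 1 w] Suc.prems by simp
    then have "\<psi> ([:0, 1:] ^ Suc w) = rk_mult k (\<psi> [:0, 1:]) (\<psi> ([:0, 1:] ^ w))"
      using \<psi>_mult[OF u, of "[:0, 1:] ^ w"] Suc.prems by (simp add: degree_upow)
    then show ?case using Suc k1 by (simp add: coeff0_rk c_def)
  qed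
  have "rk_mult k [:0, 1:] ([:0, 1:] ^ (k - 1) :: 'a poly) = 0"
    using k2 by (simp add: rk_mult_def power_Suc[symmetric])
  then have "0 = rk_mult k (\<psi> [:0, 1:]) (\<psi> ([:0, 1:] ^ (k - 1)))"
    using \<psi>_mult[OF u, of "[:0, 1:] ^ (k - 1)"] k2 by (simp add: degree_upow \<psi>_zero)
  then have "coeff (0::'a poly) 0 = coeff (\<psi> [:0, 1:]) 0 * coeff (\<psi> ([:0, 1:] ^ (k - 1))) 0"
    using coeff0_rk[OF k1] by metis
  also have "\<dots> = c * c ^ (k - 1)" using pw[of "k - 1"] k1 by (simp add: c_def)
  also have "\<dots> = c ^ k" using k1 by (metis power_Suc Suc_diff_1 less_le_trans zero_less_one)
  finally have "c ^ k = 0" by simp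
  then show ?thesis by (simp add: c_def)
qed

lemma \<psi>_upow_dvd: "w < k \<Longrightarrow> [:0, 1:] ^ w dvd \<psi> ([:0, 1:] ^ w)"
proof (induction w)
  case 0 then show ?case by simp
next
  case (Suc w)
  then have k2: "k \<ge> 2" by simp
  have u: "degree ([:0, 1:] :: 'a poly) < k" using k2 by simp
  have "[:0, 1:] ^ Suc w = rk_mult k [:0, 1:] ([:0, 1:] ^ w :: 'a poly)"
    using rk_upow[of 1 w] Suc.prems by simp
  then have e: "\<psi> ([:0, 1:] ^ Suc w) = rk_mult k (\<psi> [:0, 1:]) (\<psi> ([:0, 1:] ^ w))"
    using \<psi>_mult[OF u, of "[:0, 1:] ^ w"] Suc.prems by (simp add: degree_upow)
  have "[:0, 1:] ^ 1 dvd \<psi> [:0, 1:]" using \<psi>_u_coeff0[OF k2] upow_dvd_iff[of 1 "\<psi> [:0, 1:]"] by simp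
  then have "[:0, 1:] ^ (1 + w) dvd rk_mult k (\<psi> [:0, 1:]) (\<psi> ([:0, 1:] ^ w))"
    using Suc by (intro dvd_rk) auto
  then show ?case using e by simp
qed

lemma \<psi>_dvd:
  assumes w: "w < k" and a: "degree a < k" and d: "[:0, 1:] ^ w dvd a"
  shows "[:0, 1:] ^ w dvd \<psi> a"
proof -
  obtain e where e: "a = [:0, 1:] ^ w * e" using d by blast
  have ek: "degree e < k"
  proof (cases "e = 0")
    case False then show ?thesis using a e by (simp add: degree_mult_eq degree_upow)
  qed (use k1 in simp)
  have "rk_mult k ([:0, 1:] ^ w) e = a" using e a by (simp add: rk_mult_def rk_mod_id)
  then have "\<psi> a = rk_mult k (\<psi> ([:0, 1:] ^ w)) (\<psi> e)" using \<psi>_mult[of "[:0, 1:] ^ w" e] w ek by (simp add: degree_upow)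
  moreover have "[:0, 1:] ^ (w + 0) dvd rk_mult k (\<psi> ([:0, 1:] ^ w)) (\<psi> e)"
    using w by (intro dvd_rk \<psi>_upow_dvd) auto
  ultimately show ?thesis by simp
qed

end

lemma \<psi>_tw:
  fixes \<psi> :: "'a::{field,finite} poly \<Rightarrow> 'a poly"
  assumes k1: "k \<ge> 1" and iso: "\<psi> \<in> ring_iso (Rk k) (Rk k)" and w: "w < k" and c: "degree c < k"
  shows "\<exists>b. degree b < k \<and> rk_mult k b (\<psi> ([:0, 1:] ^ w)) = rk_mult k ([:0, 1:] ^ w) c"
proof -
  have hom: "\<psi> \<in> ring_hom (Rk k) (Rk k)" using iso by (simp add: ring_iso_def)
  have inj: "inj_on \<psi> {a. degree a < k}" using iso by (simp add: ring_iso_def bij_betw_def Rk_def)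
  define X where "X = {a :: 'a poly. degree a < k \<and> [:0, 1:] ^ w dvd a}"
  have fX: "finite X" unfolding X_def by (rule finite_subset[OF _ finite_Rk[of k]]) auto
  have "\<psi> ` X \<subseteq> X" unfolding X_def using \<psi>_closed[OF k1 hom] \<psi>_dvd[OF k1 hom w] by auto
  moreover have "inj_on \<psi> X" using inj by (rule inj_on_subset) (auto simp: X_def)
  ultimately have eq: "\<psi> ` X = X" using fX by (intro endo_inj_surj) auto
  have y: "rk_mult k ([:0, 1:] ^ w) c \<in> X"
    unfolding X_def using dvd_rk[of w 0 k "[:0, 1:] ^ w" c] w rk_mult_closed[OF k1] by auto
  then obtain d where d: "d \<in> X" "\<psi> d = rk_mult k ([:0, 1:] ^ w) c" using eq by (metis imageE)
  then obtain e where e: "d = [:0, 1:] ^ w * e" by (auto simp: X_def)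
  have ek: "degree e < k"
  proof (cases "e = 0")
    case False then show ?thesis using d e by (simp add: degree_mult_eq degree_upow X_def)
  qed (use k1 in simp)
  have "rk_mult k e ([:0, 1:] ^ w) = d" using e d by (simp add: rk_mult_def rk_mod_id X_def mult.commute)
  then have "\<psi> d = rk_mult k (\<psi> e) (\<psi> ([:0, 1:] ^ w))" using \<psi>_mult[OF k1 hom, of e "[:0, 1:] ^ w"] w ek by (simp add: degree_upow)
  then show ?thesis using d \<psi>_closed[OF k1 hom ek] by metis
qed


lemma ring_field: "ring \<lparr>carrier = (UNIV :: 'a::comm_ring_1 set), mult = (*), one = 1, zero = 0, add = (+)\<rparr>"
proof (rule ringI)
  show "abelian_group \<lparr>carrier = (UNIV :: 'a::comm_ring_1 set), mult = (*), one = 1, zero = 0, add = (+)\<rparr>"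
    by (rule abelian_groupI) (auto simp: algebra_simps intro: exI[of _ "- _"])
  show "monoid \<lparr>carrier = (UNIV :: 'a::comm_ring_1 set), mult = (*), one = 1, zero = 0, add = (+)\<rparr>"
    by (rule monoidI) (auto simp: algebra_simps)
qed (auto simp: algebra_simps)

lemma const_sum: "finite S \<Longrightarrow> (\<Sum>i\<in>S. [:f i:]) = [:\<Sum>i\<in>S. f i:]"
  by (induction S rule: finite_induct) auto

locale mctx =
  fixes k :: nat and \<Theta> :: "'a::{field,finite} poly \<Rightarrow> 'a poly" and \<theta> :: "'a \<Rightarrow> 'a"
  assumes k1: "k \<ge> 1" and \<Theta>iso: "\<Theta> \<in> ring_iso (Rk k) (Rk k)" and \<Theta>c: "\<forall>c. \<Theta> [:c:] = [:\<theta> c:]"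
begin

lemma \<Theta>hom: "\<Theta> \<in> ring_hom (Rk k) (Rk k)" using \<Theta>iso by (simp add: ring_iso_def)

lemma \<Theta>p_iso: "(\<Theta>^^n) \<in> ring_iso (Rk k) (Rk k)"
proof (induction n)
  case 0
  have "(\<lambda>a. a) \<in> ring_hom (Rk k) (Rk k)" by (rule ring_hom_memI) auto
  then show ?case using bij_betw_id[unfolded id_def] by (simp add: ring_iso_def del: id_apply)
next
  case (Suc n)
  then have "\<Theta> \<circ> (\<Theta>^^n) \<in> ring_hom (Rk k) (Rk k)" using \<Theta>hom by (intro ring_hom_trans) (auto simp: ring_iso_def)
  moreover have "bij_betw (\<Theta> \<circ> (\<Theta>^^n)) (carrier (Rk k)) (carrier (Rk k))"
    using Suc \<Theta>iso by (intro bij_betw_trans) (auto simp: ring_iso_def)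
  ultimately show ?case by (simp add: ring_iso_def o_def)
qed

lemma \<Theta>p_hom: "(\<Theta>^^n) \<in> ring_hom (Rk k) (Rk k)" using \<Theta>p_iso by (simp add: ring_iso_def)

lemma Rk_rec: "\<lparr>carrier = carrier (Rk k), mult = rk_mult k, one = 1, zero = 0, add = (+)\<rparr> = Rk k"
  by (simp add: Rk_def)

lemma rk_const: "rk_mult k [:a:] [:b:] = [:a * b:]"
  using k1 by (simp add: rk_mult_def rk_mod_id)

lemma \<theta>_mult: "\<theta> (a * b) = \<theta> a * \<theta> b"
proof -
  have "[:\<theta> (a * b):] = \<Theta> (rk_mult k [:a:] [:b:])" using \<Theta>c by (simp add: rk_const)
  also have "\<dots> = rk_mult k (\<Theta> [:a:]) (\<Theta> [:b:])" using \<psi>_mult[OF k1 \<Theta>hom] k1 by simp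
  finally show ?thesis using \<Theta>c by (simp add: rk_const)
qed
lemma \<theta>_add: "\<theta> (a + b) = \<theta> a + \<theta> b"
proof -
  have "[:\<theta> (a + b):] = \<Theta> ([:a:] + [:b:])" using \<Theta>c by simp
  also have "\<dots> = \<Theta> [:a:] + \<Theta> [:b:]" using \<psi>_add[OF k1 \<Theta>hom, of "[:a:]" "[:b:]"] k1 by simp
  finally show ?thesis using \<Theta>c by simp
qed
lemma \<theta>_one: "\<theta> 1 = 1"
  using \<Theta>c \<psi>_one[OF k1 \<Theta>hom] by (metis one_pCons pCons_eq_iff)

lemma sbS: "skew_base (carrier (Rk k)) (rk_mult k) \<Theta>"
  by (rule skew_base.intro) (simp_all only: Rk_rec Rk_ring[OF k1] \<Theta>hom)

lemma sbP: "skew_base (UNIV :: 'a set) (*) \<theta>"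
  by (rule skew_base.intro) (auto simp: ring_field intro!: ring_hom_memI \<theta>_mult \<theta>_add \<theta>_one)

end

sublocale mctx \<subseteq> sS: skew_base "carrier (Rk k)" "rk_mult k" \<Theta> by (rule sbS)
sublocale mctx \<subseteq> sP: skew_base "UNIV :: 'a set" "(*)" \<theta> by (rule sbP)

context mctx
begin

abbreviation "mS \<equiv> skew_mult (rk_mult k) \<Theta>"
abbreviation "mP \<equiv> skew_mult (*) \<theta>"
abbreviation "S \<equiv> skewRk k \<Theta>"
abbreviation "P \<equiv> skewF \<theta>"

lemma carrierS: "carrier S = sS.SC" by (simp add: skewRk_def sS.SC_def)
lemma SC_S: "A \<in> sS.SC \<longleftrightarrow> (\<forall>n. degree (coeff A n) < k)" unfolding sS.SC_def by (simp add: Rk_def)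
lemma multS: "mult S = mS" by (simp add: skewRk_def)
lemma addS: "add S = (+)" by (simp add: skewRk_def)
lemma zeroS: "zero S = 0" by (simp add: skewRk_def)
lemma oneS: "one S = 1" by (simp add: skewRk_def)
lemma carrierP: "carrier P = UNIV" by (simp add: skewF_def)
lemma multP: "mult P = mP" by (simp add: skewF_def)
lemma SC_P: "sP.SC = UNIV" by (simp add: sP.SC_def)

lemma ringS: "ring S"
  using sS.skew_ring unfolding skewRk_def by simp

lemma ringP: "ring P"
  using sP.skew_ring unfolding skewF_def by simp

lemma coeff_emb: "coeff (emb p) n = [:coeff p n:]"
  by (simp add: emb_def coeff_map_poly)

lemma emb_SC: "emb p \<in> sS.SC" using k1 by (simp add: SC_S coeff_emb)

lemma coeff_mu: "coeff (mu A) n = coeff (coeff A n) 0"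
  by (simp add: mu_def coeff_map_poly)

lemma mu_emb: "mu (emb p) = p" by (rule poly_eqI) (simp add: coeff_mu coeff_emb)

lemma emb_add: "emb (p + q) = emb p + emb q" by (rule poly_eqI) (simp add: coeff_emb)
lemma emb_diff: "emb (p - q) = emb p - emb q" by (rule poly_eqI) (simp add: coeff_emb)
lemma emb_0: "emb 0 = 0" by (simp add: emb_def)
lemma emb_1: "emb 1 = 1" by (simp add: emb_def)
lemma mu_add: "mu (A + B) = mu A + mu B" by (rule poly_eqI) (simp add: coeff_mu)
lemma mu_diff: "mu (A - B) = mu A - mu B" by (rule poly_eqI) (simp add: coeff_mu)

lemma \<Theta>p_const: "(\<Theta>^^n) [:c:] = [:(\<theta>^^n) c:]"
  by (induction n) (auto simp: \<Theta>c)

lemma emb_mult: "emb (mP p q) = mS (emb p) (emb q)"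
proof (rule poly_eqI)
  fix n
  have "coeff (mS (emb p) (emb q)) n = (\<Sum>i\<le>n. [:coeff p i * (\<theta>^^i) (coeff q (n - i)):])"
    by (simp add: sS.coeff_skew emb_SC coeff_emb \<Theta>p_const rk_const)
  also have "\<dots> = [:coeff (mP p q) n:]" by (simp add: const_sum sP.coeff_skew SC_P)
  finally show "coeff (emb (mP p q)) n = coeff (mS (emb p) (emb q)) n" by (simp add: coeff_emb)
qed

lemma coeff0_\<Theta>: assumes b: "degree b < k" shows "coeff (\<Theta> b) 0 = \<theta> (coeff b 0)"
proof (cases "k = 1")
  case True
  then have "b = [:coeff b 0:]" using b by (metis degree_0_id less_one)
  then show ?thesis using \<Theta>c by (metis coeff_pCons_0)
next
  case False
  then have k2: "k \<ge> 2" using k1 by simp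
  have d: "degree (b - [:coeff b 0:]) < k" using b k1 by (intro degree_diff_less) auto
  have "[:0, 1:] ^ 1 dvd (b - [:coeff b 0:])" using upow_dvd_iff[of 1 "b - [:coeff b 0:]"] by simp
  then have "[:0, 1:] ^ 1 dvd \<Theta> (b - [:coeff b 0:])" using \<psi>_dvd[OF k1 \<Theta>hom _ d, of 1] k2 by linarith
  then have z: "coeff (\<Theta> (b - [:coeff b 0:])) 0 = 0" using upow_dvd_iff[of 1 "\<Theta> (b - [:coeff b 0:])"] by simp
  have "\<Theta> b = \<Theta> [:coeff b 0:] + \<Theta> (b - [:coeff b 0:])"
    using \<psi>_add[OF k1 \<Theta>hom, of "[:coeff b 0:]" "b - [:coeff b 0:]"] d k1 by simp
  then show ?thesis using z \<Theta>c by simp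
qed

lemma coeff0_\<Theta>p: "degree b < k \<Longrightarrow> coeff ((\<Theta>^^n) b) 0 = (\<theta>^^n) (coeff b 0)"
proof (induction n)
  case (Suc n)
  have "degree ((\<Theta>^^n) b) < k" using \<psi>_closed[OF k1 \<Theta>p_hom] Suc.prems by blast
  then show ?case using Suc by (simp add: coeff0_\<Theta>)
qed simp

lemma mu_mult: assumes A: "A \<in> sS.SC" and B: "B \<in> sS.SC" shows "mu (mS A B) = mP (mu A) (mu B)"
proof (rule poly_eqI)
  fix n
  have "coeff (mu (mS A B)) n = (\<Sum>i\<le>n. coeff (rk_mult k (coeff A i) ((\<Theta>^^i) (coeff B (n-i)))) 0)"
    using A B by (simp add: coeff_mu sS.coeff_skew coeff_sum)
  also have "\<dots> = (\<Sum>i\<le>n. coeff (coeff A i) 0 * (\<theta>^^i) (coeff (coeff B (n-i)) 0))"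
    using B by (intro sum.cong) (auto simp: coeff0_rk[OF k1] coeff0_\<Theta>p SC_S)
  finally show "coeff (mu (mS A B)) n = coeff (mP (mu A) (mu B)) n"
    by (simp add: sP.coeff_skew SC_P coeff_mu)
qed

end

context mctx
begin

definition U :: "nat \<Rightarrow> 'a poly poly" where "U w = [:[:0, 1:] ^ w:]"
definition V :: "nat \<Rightarrow> 'a poly poly set" where
  "V w = {A. (\<forall>n. degree (coeff A n) < k) \<and> (\<forall>n. [:0, 1:] ^ w dvd coeff A n)}"

lemma V_SC: "A \<in> V w \<Longrightarrow> A \<in> sS.SC" by (simp add: V_def SC_S)
lemma V_zero: "0 \<in> V w" using k1 by (simp add: V_def)
lemma V_0: "V 0 = sS.SC" by (auto simp: V_def SC_S)
lemma V_k: "V k = {0}"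
proof -
  have "c = 0" if "degree c < k" "[:0, 1:] ^ k dvd c" for c :: "'a poly"
  proof (rule ccontr)
    assume "c \<noteq> 0"
    then have "degree ([:0, 1:] ^ k :: 'a poly) \<le> degree c" using that(2) by (rule dvd_imp_degree_le[rotated])
    then show False using that(1) by (simp add: degree_upow)
  qed
  have "A = 0" if "A \<in> V k" for A
  proof -
    have "coeff A n = 0" for n using that \<open>\<And>c. _ \<Longrightarrow> _ \<Longrightarrow> c = 0\<close> by (simp add: V_def)
    then show ?thesis by (simp add: poly_eq_iff)
  qed
  then show ?thesis using V_zero k1 by (auto simp: V_def)
qed
lemma V_mono: "w \<le> v \<Longrightarrow> V v \<subseteq> V w"
  by (auto simp: V_def intro: dvd_trans[OF le_imp_power_dvd])
lemma V_add: "A \<in> V w \<Longrightarrow> B \<in> V w \<Longrightarrow> A + B \<in> V w"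
  by (auto simp: V_def degree_add_less)
lemma V_diff: "A \<in> V w \<Longrightarrow> B \<in> V w \<Longrightarrow> A - B \<in> V w"
  by (auto simp: V_def degree_diff_less)
lemma V_sum: "finite T \<Longrightarrow> (\<And>t. t \<in> T \<Longrightarrow> f t \<in> V w) \<Longrightarrow> (\<Sum>t\<in>T. f t) \<in> V w"
  by (induction T rule: finite_induct) (auto simp: V_zero V_add)

lemma V_lmult:
  assumes B: "B \<in> sS.SC" and A: "A \<in> V w" and w: "w \<le> k"
  shows "mS B A \<in> V w"
proof (cases "w = k")
  case True
  then have "A = 0" using A V_k by auto
  then show ?thesis using B k1 by (simp add: V_def sS.coeff_skew sS.SC_0 rk_mult_0 sS.\<sigma>p_zero)
next
  case False
  then have wk: "w < k" using w by simp
  have AS: "A \<in> sS.SC" using A by (rule V_SC)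
  have "[:0, 1:] ^ w dvd coeff (mS B A) n" for n
  proof -
    have "[:0, 1:] ^ (0 + w) dvd rk_mult k (coeff B i) ((\<Theta>^^i) (coeff A (n - i)))" for i
      using A wk by (intro dvd_rk \<psi>_dvd[OF k1 \<Theta>p_hom]) (auto simp: V_def)
    then show ?thesis using AS B by (simp add: sS.coeff_skew dvd_sum)
  qed
  moreover have "mS B A \<in> sS.SC" using B AS by (rule sS.SC_mul)
  ultimately show ?thesis by (simp add: V_def SC_S)
qed

lemma V_rmult:
  assumes A: "A \<in> V w" and B: "B \<in> sS.SC" and w: "w \<le> k"
  shows "mS A B \<in> V w"
proof -
  have AS: "A \<in> sS.SC" using A by (rule V_SC)
  have "[:0, 1:] ^ w dvd coeff (mS A B) n" for n
  proof -
    have "[:0, 1:] ^ (w + 0) dvd rk_mult k (coeff A i) ((\<Theta>^^i) (coeff B (n - i)))" for i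
      using A w by (intro dvd_rk) (auto simp: V_def)
    then show ?thesis using AS B by (simp add: sS.coeff_skew dvd_sum)
  qed
  moreover have "mS A B \<in> sS.SC" using AS B by (rule sS.SC_mul)
  ultimately show ?thesis by (simp add: V_def SC_S)
qed

lemma U_SC: "w < k \<Longrightarrow> U w \<in> sS.SC"
  by (auto simp: U_def SC_S coeff_pCons degree_upow split: nat.split)

lemma U_0: "U 0 = 1" by (simp add: U_def)

lemma upow_carrier: "w < k \<Longrightarrow> [:0, 1:] ^ w \<in> carrier (Rk k)" by (simp add: Rk_def degree_upow)

lemma coeff_U_mult: "w < k \<Longrightarrow> A \<in> sS.SC \<Longrightarrow> coeff (mS (U w) A) n = rk_mult k ([:0, 1:] ^ w) (coeff A n)"
  unfolding U_def by (rule sS.coeff_skew_const_l) (simp_all add: upow_carrier)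

lemma U_mult_V:
  assumes w: "w < k" and wv: "w + v \<le> k" and A: "A \<in> V v"
  shows "mS (U w) A \<in> V (w + v)"
proof -
  have AS: "A \<in> sS.SC" using A by (rule V_SC)
  have "[:0, 1:] ^ (w + v) dvd coeff (mS (U w) A) n" for n
    using A wv by (simp add: coeff_U_mult[OF w AS] V_def dvd_rk)
  moreover have "mS (U w) A \<in> sS.SC" using AS U_SC[OF w] by (intro sS.SC_mul)
  ultimately show ?thesis by (simp add: V_def SC_S)
qed

lemma U_mult_S: "w < k \<Longrightarrow> A \<in> sS.SC \<Longrightarrow> mS (U w) A \<in> V w"
  using U_mult_V[of w 0 A] by (simp add: V_0)

lemma U_U: assumes "w + v < k" shows "mS (U w) (U v) = U (w + v)"
proof (rule poly_eqI)
  fix n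
  have "coeff (mS (U w) (U v)) n = rk_mult k ([:0, 1:] ^ w) (coeff (U v) n)"
    using assms by (intro coeff_U_mult U_SC) auto
  also have "\<dots> = coeff (U (w + v)) n"
    using assms k1 by (cases n) (auto simp: U_def rk_upow[OF k1 \<Theta>hom] rk_mult_0)
  finally show "coeff (mS (U w) (U v)) n = coeff (U (w + v)) n" .
qed

lemma rk_upow_const: "w < k \<Longrightarrow> rk_mult k ([:0, 1:] ^ w) [:c:] = monom c w"
proof -
  assume w: "w < k"
  have "[:0, 1:] ^ w * [:c:] = monom c w" by (simp add: monom_altdef)
  moreover have "degree (monom c w) < k" using w degree_monom_le[of c w] by linarith
  ultimately show ?thesis by (simp add: rk_mult_def rk_mod_id)
qed

lemma decomp:
  assumes A: "A \<in> V w" and w: "w < k"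
  shows "A - mS (U w) (emb (map_poly (\<lambda>c. coeff c w) A)) \<in> V (w + 1)"
proof -
  define z where "z = map_poly (\<lambda>c. coeff c w) A"
  have AS: "A \<in> sS.SC" using A by (rule V_SC)
  have cz: "coeff (mS (U w) (emb z)) n = monom (coeff (coeff A n) w) w" for n
    using w by (simp add: coeff_U_mult emb_SC coeff_emb rk_upow_const z_def coeff_map_poly)
  have "coeff (coeff (A - mS (U w) (emb z)) n) i = 0" if "i < w + 1" for n i
  proof -
    have "coeff (coeff A n) i = 0" if "i < w" using A that by (auto simp: V_def upow_dvd_iff)
    then show ?thesis using that by (auto simp: cz coeff_monom)
  qed
  then have "[:0, 1:] ^ (w + 1) dvd coeff (A - mS (U w) (emb z)) n" for n unfolding upow_dvd_iff by blast
  moreover have "A - mS (U w) (emb z) \<in> sS.SC" using AS U_SC[OF w] emb_SC by (intro sS.SC_diff sS.SC_mul)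
  ultimately show ?thesis by (simp add: V_def SC_S z_def)
qed

lemma mu_V1: assumes A: "A \<in> sS.SC" shows "A - emb (mu A) \<in> V 1"
proof -
  have "[:0, 1:] ^ 1 dvd coeff (A - emb (mu A)) n" for n
    unfolding upow_dvd_iff by (simp add: coeff_emb coeff_mu)
  moreover have "A - emb (mu A) \<in> sS.SC" using A emb_SC by (intro sS.SC_diff)
  ultimately show ?thesis by (simp add: V_def SC_S)
qed

lemma TW_S:
  assumes w: "w < k"
  shows "\<exists>B \<in> sS.SC. mS B (U w) = mS (U w) (emb q)"
proof -
  have "\<forall>n. \<exists>b. degree b < k \<and> rk_mult k b ((\<Theta>^^n) ([:0, 1:] ^ w)) = rk_mult k ([:0, 1:] ^ w) [:coeff q n:]"
    using \<psi>_tw[OF k1 \<Theta>p_iso w] k1 by simp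
  then obtain bb where bb: "\<And>n. degree (bb n) < k" "\<And>n. rk_mult k (bb n) ((\<Theta>^^n) ([:0, 1:] ^ w)) = rk_mult k ([:0, 1:] ^ w) [:coeff q n:]"
    by metis
  define B where "B = (\<Sum>n\<le>degree q. monom (bb n) n)"
  have cB: "coeff B n = (if n \<le> degree q then bb n else 0)" for n
    by (simp add: B_def coeff_sum coeff_monom sum.delta')
  have BS: "B \<in> sS.SC" using bb k1 by (simp add: SC_S cB)
  have "mS B (U w) = mS (U w) (emb q)"
  proof (rule poly_eqI)
    fix n
    have "coeff (mS B (U w)) n = rk_mult k (coeff B n) ((\<Theta>^^n) ([:0, 1:] ^ w))"
      unfolding U_def by (rule sS.coeff_skew_const_r) (simp_all add: upow_carrier w BS)
    also have "\<dots> = coeff (mS (U w) (emb q)) n"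
      using w bb by (auto simp: cB coeff_U_mult emb_SC coeff_emb rk_mult_0 coeff_eq_0)
    finally show "coeff (mS B (U w)) n = coeff (mS (U w) (emb q)) n" .
  qed
  then show ?thesis using BS by blast
qed

end

context mctx
begin

lemma mP_const_l: "mP [:c:] z = smult c z"
  by (rule poly_eqI) (simp add: sP.coeff_skew_const_l SC_P)

lemma mP_0_l: "mP 0 z = 0"
  using mP_const_l[of 0 z] by simp

lemma mP_distr_l: "mP (p + q) a = mP p a + mP q a"
  by (rule sP.skew_distr_l) (simp_all add: SC_P)

lemma mP_distr_r: "mP a (p + q) = mP a p + mP a q"
  by (rule sP.skew_distr_r) (simp_all add: SC_P)

lemma mP_assoc: "mP (mP p q) r = mP p (mP q r)"
  by (rule sP.skew_assoc) (simp_all add: SC_P)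

lemma mP_diff_r: "mP a (p - q) = mP a p - mP a q"
  using mP_distr_r[of a "p - q" q] by simp

lemma mP_diff_l: "mP (p - q) a = mP p a - mP q a"
  using mP_distr_l[of "p - q" q a] by simp

lemma deg_mP_monic:
  assumes a: "lead_coeff a = 1" and q: "q \<noteq> 0"
  shows "degree (mP q a) = degree q + degree a"
  using sP.degree_skew_eq(1)[of q a] q a by (simp add: SC_P sP.\<sigma>p_one)

lemma right_div:
  assumes a: "lead_coeff a = 1"
  shows "\<exists>q r. b = mP q a + r \<and> (r = 0 \<or> degree r < degree a)"
proof (induction "degree b" arbitrary: b rule: less_induct)
  case less
  show ?case
  proof (cases "b = 0 \<or> degree b < degree a")
    case True
    then show ?thesis by (intro exI[of _ 0] exI[of _ b]) (auto simp: mP_0_l)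
  next
    case False
    then have b0: "b \<noteq> 0" and ge: "degree a \<le> degree b" by auto
    define d where "d = degree b - degree a"
    define c where "c = lead_coeff b"
    have cm: "coeff (mP (monom c d) a) n = (if d \<le> n then c * (\<theta>^^d) (coeff a (n - d)) else 0)" for n
      by (simp add: sP.coeff_skew_monom_l SC_P)
    define b' where "b' = b - mP (monom c d) a"
    have hi: "coeff b' n = 0" if "n \<ge> degree b" for n
    proof (cases "n = degree b")
      case True
      have "coeff (mP (monom c d) a) (degree b) = c" using cm[of "degree b"] ge a by (simp add: d_def sP.\<sigma>p_one)
      then show ?thesis using True by (simp add: b'_def c_def)
    next
      case False
      then have "n > degree b" using that by simp
      then have "coeff a (n - d) = 0" using ge by (simp add: d_def coeff_eq_0)
      then have "coeff (mP (monom c d) a) n = 0" using cm[of n] by (simp add: sP.\<sigma>p_zero)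
      then show ?thesis using \<open>n > degree b\<close> by (simp add: b'_def coeff_eq_0)
    qed
    have "b' = 0 \<or> degree b' < degree b"
    proof (cases "b' = 0")
      case False
      then have "coeff b' (degree b') \<noteq> 0" by simp
      then have "\<not> degree b' \<ge> degree b" using hi by blast
      then show ?thesis by simp
    qed simp
    then show ?thesis
    proof
      assume "b' = 0"
      then show ?thesis by (intro exI[of _ "monom c d"] exI[of _ 0]) (simp add: b'_def)
    next
      assume "degree b' < degree b"
      then obtain q r where qr: "b' = mP q a + r" "r = 0 \<or> degree r < degree a" using less by blast
      have "b = mP (q + monom c d) a + r" using qr(1) by (simp add: mP_distr_l b'_def algebra_simps)
      then show ?thesis using qr(2) by blast
    qed
  qed
qed

lemma gen_exists:
  assumes c1: "\<And>x y. x \<in> T \<Longrightarrow> y \<in> T \<Longrightarrow> x - y \<in> T"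
    and c2: "\<And>p x. x \<in> T \<Longrightarrow> mP p x \<in> T"
    and c3: "M \<in> T" "M \<noteq> 0"
  shows "\<exists>a. lead_coeff a = 1 \<and> a \<in> T \<and> (\<forall>b\<in>T. \<exists>q. b = mP q a)"
proof -
  define d0 where "d0 = (LEAST d. \<exists>x\<in>T. x \<noteq> 0 \<and> degree x = d)"
  have "\<exists>x\<in>T. x \<noteq> 0 \<and> degree x = d0" unfolding d0_def
    by (rule LeastI_ex) (use c3 in blast)
  then obtain x0 where x0: "x0 \<in> T" "x0 \<noteq> 0" "degree x0 = d0" by blast
  have least: "degree x \<ge> d0" if "x \<in> T" "x \<noteq> 0" for x
    unfolding d0_def using that by (intro Least_le) blast
  define a where "a = mP [:inverse (lead_coeff x0):] x0"
  have aT: "a \<in> T" using c2 x0 by (simp add: a_def)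
  have a_eq: "a = smult (inverse (lead_coeff x0)) x0" by (simp add: a_def mP_const_l)
  have la: "lead_coeff a = 1" using x0(2) by (simp add: a_eq)
  have da: "degree a = d0" using x0(2) by (simp add: a_eq x0(3)[symmetric])
  have "\<exists>q. b = mP q a" if b: "b \<in> T" for b
  proof -
    obtain q r where qr: "b = mP q a + r" "r = 0 \<or> degree r < degree a" using right_div[OF la] by blast
    have "r = b - mP q a" using qr by simp
    then have "r \<in> T" using c1 c2 b aT by simp
    then have "r = 0" using qr(2) least da by force
    then show ?thesis using qr by auto
  qed
  then show ?thesis using la aT by blast
qed

end

locale ictx = mctx +
  fixes F0 :: "'a poly poly" and I :: "'a poly poly set set" and N :: nat
  assumes F0S: "F0 \<in> carrier (skewRk k \<Theta>)" and F0lead: "lead_coeff F0 = 1" and F0deg: "degree F0 = N"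
    and N1: "N \<ge> 1"
    and Iid: "left_ideal I (skewRk k \<Theta> Quot (Idl\<^bsub>skewRk k \<Theta>\<^esub> {F0}))"
begin

abbreviation "J \<equiv> Idl\<^bsub>S\<^esub> {F0}"
abbreviation "Q \<equiv> S Quot J"
definition It where "It = {X \<in> carrier S. J +>\<^bsub>S\<^esub> X \<in> I}"

lemma J_ideal: "ideal J S" using ring.genideal_ideal[OF ringS] F0S by simp
lemma F0J: "F0 \<in> J" using ring.genideal_self'[OF ringS F0S] .
lemma Q_ring: "ring Q" using ideal.quotient_is_ring[OF J_ideal] .
lemma hom: "((+>\<^bsub>S\<^esub>) J) \<in> ring_hom S Q" using ideal.rcos_ring_hom[OF J_ideal] .
lemma I_sub: "additive_subgroup I Q" using Iid by (simp add: left_ideal_def)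
lemma I_lmult: "a \<in> carrier Q \<Longrightarrow> x \<in> I \<Longrightarrow> a \<otimes>\<^bsub>Q\<^esub> x \<in> I" using Iid by (simp add: left_ideal_def)

lemma It_S: "X \<in> It \<Longrightarrow> X \<in> sS.SC" by (simp add: It_def carrierS)

lemma It_add: assumes "X \<in> It" "Y \<in> It" shows "X + Y \<in> It"
proof -
  have "J +>\<^bsub>S\<^esub> (X + Y) = (J +>\<^bsub>S\<^esub> X) \<oplus>\<^bsub>Q\<^esub> (J +>\<^bsub>S\<^esub> Y)"
    using ring_hom_add[OF hom, of X Y] assms by (simp add: It_def addS)
  moreover have "X + Y \<in> carrier S" using assms by (simp add: It_def carrierS sS.SC_add)
  ultimately show ?thesis using assms additive_subgroup.a_closed[OF I_sub] by (simp add: It_def)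
qed

lemma J_rcos0: "J +>\<^bsub>S\<^esub> 0 = J"
proof -
  have "0 \<in> J" using ideal.axioms(1)[OF J_ideal] additive_subgroup.zero_closed by (metis zeroS)
  then show "J +>\<^bsub>S\<^esub> 0 = J" using ring.a_rcos_zero[OF ringS J_ideal] by simp
qed

lemma It_zero: "0 \<in> It"
proof -
  have "J +>\<^bsub>S\<^esub> 0 = J" by (rule J_rcos0)
  moreover have "J \<in> I" using additive_subgroup.zero_closed[OF I_sub] by (simp add: FactRing_def)
  ultimately show ?thesis using ring.ring_simprules(2)[OF ringS] by (simp add: It_def zeroS)
qed

lemma J_It: "X \<in> J \<Longrightarrow> X \<in> It"
proof -
  assume X: "X \<in> J"
  then have "J +>\<^bsub>S\<^esub> X = J" using ring.a_rcos_zero[OF ringS J_ideal] by simp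
  moreover have "J \<in> I" using additive_subgroup.zero_closed[OF I_sub] by (simp add: FactRing_def)
  moreover have "X \<in> carrier S" using X ideal.Icarr[OF J_ideal] by blast
  ultimately show ?thesis by (simp add: It_def)
qed

lemma It_uminus: assumes X: "X \<in> It" shows "- X \<in> It"
proof -
  have XS: "X \<in> carrier S" "- X \<in> carrier S" using X by (auto simp: It_def carrierS sS.SC_uminus)
  have hX: "J +>\<^bsub>S\<^esub> X \<in> carrier Q" "J +>\<^bsub>S\<^esub> (- X) \<in> carrier Q"
    using ring_hom_closed[OF hom] XS by auto
  have "(J +>\<^bsub>S\<^esub> (- X)) \<oplus>\<^bsub>Q\<^esub> (J +>\<^bsub>S\<^esub> X) = J +>\<^bsub>S\<^esub> (- X + X)"
    using ring_hom_add[OF hom, of "- X" X] XS by (simp add: addS)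
  also have "\<dots> = \<zero>\<^bsub>Q\<^esub>"
    using J_rcos0 by (simp add: FactRing_def)
  finally have "\<ominus>\<^bsub>Q\<^esub> (J +>\<^bsub>S\<^esub> X) = J +>\<^bsub>S\<^esub> (- X)"
    using abelian_group.minus_equality[OF ring.is_abelian_group[OF Q_ring]] hX by blast
  then show ?thesis using X XS additive_subgroup.a_inv_closed[OF I_sub] by (simp add: It_def) metis
qed

lemma It_diff: "X \<in> It \<Longrightarrow> Y \<in> It \<Longrightarrow> X - Y \<in> It"
  using It_add[of X "- Y"] It_uminus[of Y] by simp

lemma It_lmult: assumes B: "B \<in> sS.SC" and X: "X \<in> It" shows "mS B X \<in> It"
proof -
  have XS: "X \<in> carrier S" "B \<in> carrier S" using X B by (auto simp: It_def carrierS)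
  have "J +>\<^bsub>S\<^esub> (mS B X) = (J +>\<^bsub>S\<^esub> B) \<otimes>\<^bsub>Q\<^esub> (J +>\<^bsub>S\<^esub> X)"
    using ring_hom_mult[OF hom, of B X] XS by (simp add: multS)
  moreover have "J +>\<^bsub>S\<^esub> B \<in> carrier Q" using ring_hom_closed[OF hom] XS by auto
  moreover have "mS B X \<in> carrier S" using XS by (simp add: carrierS sS.SC_mul)
  ultimately show ?thesis using X I_lmult by (simp add: It_def)
qed

lemma It_sum: "finite A \<Longrightarrow> (\<And>i. i \<in> A \<Longrightarrow> f i \<in> It) \<Longrightarrow> (\<Sum>i\<in>A. f i) \<in> It"
  by (induction A rule: finite_induct) (auto simp: It_zero It_add)

lemma finsum_S: "finite A \<Longrightarrow> (\<And>i. i \<in> A \<Longrightarrow> f i \<in> carrier S) \<Longrightarrow> finsum S f A = (\<Sum>i\<in>A. f i)"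
proof (induction A rule: finite_induct)
  case empty
  interpret r: ring S by (rule ringS)
  show ?case using r.finsum_empty by (simp add: zeroS)
next
  case (insert x F)
  interpret r: ring S by (rule ringS)
  show ?case using r.finsum_insert[of F x f] insert by (simp add: addS Pi_def)
qed

end

context mctx
begin
lemma mS_assoc: "A \<in> sS.SC \<Longrightarrow> B \<in> sS.SC \<Longrightarrow> D \<in> sS.SC \<Longrightarrow> mS (mS A B) D = mS A (mS B D)"
  by (rule sS.skew_assoc)
lemma mS_distr_r: "A \<in> sS.SC \<Longrightarrow> B \<in> sS.SC \<Longrightarrow> D \<in> sS.SC \<Longrightarrow> mS D (A + B) = mS D A + mS D B"
  by (rule sS.skew_distr_r)
lemma mS_diff_r: "A \<in> sS.SC \<Longrightarrow> B \<in> sS.SC \<Longrightarrow> D \<in> sS.SC \<Longrightarrow> mS D (A - B) = mS D A - mS D B"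
  using sS.skew_distr_r[of "A - B" B D] by (simp add: sS.SC_diff)
lemma mS_0_r: "A \<in> sS.SC \<Longrightarrow> mS A 0 = 0"
  using mS_diff_r[of 0 0 A] sS.SC_0 by simp
lemma SC_sum: "finite T \<Longrightarrow> (\<And>t. t \<in> T \<Longrightarrow> f t \<in> sS.SC) \<Longrightarrow> (\<Sum>t\<in>T. f t) \<in> sS.SC"
  by (induction T rule: finite_induct) (auto simp: sS.SC_0 sS.SC_add)
lemma mS_sum_r: "finite T \<Longrightarrow> (\<And>t. t \<in> T \<Longrightarrow> f t \<in> sS.SC) \<Longrightarrow> D \<in> sS.SC \<Longrightarrow> mS D (\<Sum>t\<in>T. f t) = (\<Sum>t\<in>T. mS D (f t))"
proof (induction T rule: finite_induct)
  case empty then show ?case by (simp add: mS_0_r)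
next
  case (insert x F)
  have "(\<Sum>t\<in>F. f t) \<in> sS.SC" using insert by (intro SC_sum) auto
  then show ?case using insert by (simp add: mS_distr_r)
qed
end

context ictx
begin

definition T :: "nat \<Rightarrow> 'a poly set" where
  "T w = {z. \<exists>R \<in> V (w + 1). mS (U w) (emb z) + R \<in> It}"

abbreviation "M \<equiv> mu F0"

lemma F0SC: "F0 \<in> sS.SC" using F0S by (simp add: carrierS)

lemma M_props: "lead_coeff M = 1" "degree M = N" "M \<noteq> 0"
proof -
  have c: "coeff M N = 1" using F0lead F0deg by (simp add: coeff_mu)
  have "coeff M n = 0" if "n > N" for n using that F0deg by (simp add: coeff_mu coeff_eq_0)
  then have d: "degree M = N" using c by (metis le_antisym le_degree leI one_neq_zero degree_le)
  then show "degree M = N" "lead_coeff M = 1" "M \<noteq> 0" using c by auto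
qed

lemma T_diff: assumes w: "w < k" and z: "z1 \<in> T w" "z2 \<in> T w" shows "z1 - z2 \<in> T w"
proof -
  obtain R1 R2 where R: "R1 \<in> V (w + 1)" "R2 \<in> V (w + 1)" "mS (U w) (emb z1) + R1 \<in> It" "mS (U w) (emb z2) + R2 \<in> It"
    using z by (auto simp: T_def)
  have "(mS (U w) (emb z1) + R1) - (mS (U w) (emb z2) + R2) = mS (U w) (emb (z1 - z2)) + (R1 - R2)"
    using w by (simp add: emb_diff mS_diff_r emb_SC U_SC)
  then have "mS (U w) (emb (z1 - z2)) + (R1 - R2) \<in> It" using It_diff[OF R(3,4)] by metis
  then show ?thesis using V_diff[OF R(1,2)] by (auto simp: T_def)
qed

lemma T_lmult: assumes w: "w < k" and z: "z \<in> T w" shows "mP p z \<in> T w"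
proof -
  obtain R where R: "R \<in> V (w + 1)" "mS (U w) (emb z) + R \<in> It" using z by (auto simp: T_def)
  obtain B where B: "B \<in> sS.SC" "mS B (U w) = mS (U w) (emb p)" using TW_S[OF w] by blast
  have RS: "R \<in> sS.SC" using R(1) by (rule V_SC)
  have e1: "mS B (mS (U w) (emb z) + R) = mS B (mS (U w) (emb z)) + mS B R"
    using B RS w by (simp add: mS_distr_r U_SC emb_SC sS.SC_mul)
  have "mS B (mS (U w) (emb z)) = mS (mS B (U w)) (emb z)"
    by (rule mS_assoc[symmetric]) (use B w in \<open>auto simp: U_SC emb_SC\<close>)
  also have "\<dots> = mS (mS (U w) (emb p)) (emb z)" using B by simp
  also have "\<dots> = mS (U w) (emb (mP p z))"
    using w by (simp add: mS_assoc U_SC emb_SC emb_mult)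
  finally have e: "mS B (mS (U w) (emb z) + R) = mS (U w) (emb (mP p z)) + mS B R" using e1 by simp
  have "mS B R \<in> V (w + 1)" using B(1) R(1) w by (intro V_lmult) auto
  then show ?thesis using It_lmult[OF B(1) R(2)] e by (auto simp: T_def)
qed

lemma M_T: assumes w: "w < k" shows "M \<in> T w"
proof -
  have "mS (U w) F0 \<in> J"
    using ideal.I_l_closed[OF J_ideal, of F0 "U w"] F0J U_SC[OF w] by (simp add: carrierS multS)
  then have "mS (U w) F0 \<in> It" by (rule J_It)
  moreover have "mS (U w) F0 = mS (U w) (emb M) + mS (U w) (F0 - emb M)"
    using w F0SC by (simp add: mS_diff_r U_SC emb_SC)
  moreover have "mS (U w) (F0 - emb M) \<in> V (w + 1)"
    using w mu_V1[OF F0SC] by (intro U_mult_V) auto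
  ultimately show ?thesis by (auto simp: T_def)
qed

lemma T_mono: assumes w: "w + 1 < k" and z: "z \<in> T w" shows "z \<in> T (w + 1)"
proof -
  obtain R where R: "R \<in> V (w + 1)" "mS (U w) (emb z) + R \<in> It" using z by (auto simp: T_def)
  have RS: "R \<in> sS.SC" using R(1) by (rule V_SC)
  have "mS (U 1) (mS (U w) (emb z) + R) = mS (U 1) (mS (U w) (emb z)) + mS (U 1) R"
    using RS w by (simp add: mS_distr_r U_SC emb_SC sS.SC_mul)
  also have "mS (U 1) (mS (U w) (emb z)) = mS (U (w + 1)) (emb z)"
    using w U_U[of 1 w] by (simp add: mS_assoc[symmetric] U_SC emb_SC)
  finally have e: "mS (U 1) (mS (U w) (emb z) + R) = mS (U (w + 1)) (emb z) + mS (U 1) R" .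
  have "mS (U 1) R \<in> V (1 + (w + 1))" using R(1) w by (intro U_mult_V) auto
  then have "mS (U 1) R \<in> V (w + 1 + 1)" by (simp add: add.commute)
  moreover have "mS (U 1) (mS (U w) (emb z) + R) \<in> It"
    using It_lmult[OF U_SC R(2)] w by simp
  ultimately show ?thesis using e by (auto simp: T_def)
qed

definition aa :: "nat \<Rightarrow> 'a poly" where
  "aa w = (SOME a. lead_coeff a = 1 \<and> a \<in> T w \<and> (\<forall>b\<in>T w. \<exists>q. b = mP q a))"

lemma aa_props: assumes w: "w < k"
  shows "lead_coeff (aa w) = 1" "aa w \<in> T w" "\<And>b. b \<in> T w \<Longrightarrow> \<exists>q. b = mP q (aa w)"
proof -
  have "\<exists>a. lead_coeff a = 1 \<and> a \<in> T w \<and> (\<forall>b\<in>T w. \<exists>q. b = mP q a)"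
    by (rule gen_exists[of "T w" M]) (use w T_diff T_lmult M_T M_props(3) in auto)
  then have "lead_coeff (aa w) = 1 \<and> aa w \<in> T w \<and> (\<forall>b\<in>T w. \<exists>q. b = mP q (aa w))"
    unfolding aa_def by (rule someI_ex)
  then show "lead_coeff (aa w) = 1" "aa w \<in> T w" "\<And>b. b \<in> T w \<Longrightarrow> \<exists>q. b = mP q (aa w)" by auto
qed

lemma aa_nz: "w < k \<Longrightarrow> aa w \<noteq> 0" using aa_props(1)[of w] by auto

lemma aa_deg: assumes w: "w < k" shows "degree (aa w) \<le> N"
proof -
  obtain q where q: "M = mP q (aa w)" using aa_props(3)[OF w M_T[OF w]] by blast
  then have "q \<noteq> 0" using M_props(3) by (auto simp: mP_0_l)
  then show ?thesis using q deg_mP_monic[OF aa_props(1)[OF w]] M_props(2) by force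
qed

lemma small_in_T:
  assumes w: "w < k" and d: "d \<in> T w" and dd: "d = 0 \<or> degree d < degree (aa w)"
  shows "d = 0"
proof (rule ccontr)
  assume nz: "d \<noteq> 0"
  obtain q where q: "d = mP q (aa w)" using aa_props(3)[OF w d] by blast
  then have "q \<noteq> 0" using nz by (auto simp: mP_0_l)
  then have "degree d = degree q + degree (aa w)" using q deg_mP_monic[OF aa_props(1)[OF w]] by simp
  then show False using dd nz by simp
qed

end

context ictx
begin

definition A :: "nat \<Rightarrow> 'a poly" where "A i = aa (i - 1)"

lemma RED:
  assumes i: "1 \<le> i" "i \<le> m" and m: "m \<le> k"
  shows "\<exists>r Z. Z \<in> V m \<and> mS (U (i - 1)) (emb (A i)) + (\<Sum>t\<in>{1..m - i}. mS (U (i - 1 + t)) (emb (r t))) + Z \<in> It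
     \<and> (\<forall>t\<in>{1..m - i}. r t = 0 \<or> degree (r t) < degree (A (i + t)))"
  using i(2) m
proof (induction m rule: dec_induct)
  case base
  have "A i \<in> T (i - 1)" using aa_props(2)[of "i - 1"] base i by (simp add: A_def)
  then obtain R where "R \<in> V i" "mS (U (i - 1)) (emb (A i)) + R \<in> It" using i by (auto simp: T_def)
  then show ?case by (intro exI[of _ "\<lambda>_. 0"] exI[of _ R]) simp
next
  case (step m)
  then obtain r Z where rZ: "Z \<in> V m" "mS (U (i - 1)) (emb (A i)) + (\<Sum>t\<in>{1..m - i}. mS (U (i - 1 + t)) (emb (r t))) + Z \<in> It"
    "\<forall>t\<in>{1..m - i}. r t = 0 \<or> degree (r t) < degree (A (i + t))" by auto
  have mk: "m < k" using step by simp
  define z where "z = map_poly (\<lambda>c. coeff c m) Z"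
  define Z' where "Z' = Z - mS (U m) (emb z)"
  have Z': "Z' \<in> V (m + 1)" unfolding Z'_def z_def by (rule decomp[OF rZ(1) mk])
  obtain q \<rho> where qr: "z = mP q (aa m) + \<rho>" "\<rho> = 0 \<or> degree \<rho> < degree (aa m)"
    using right_div[OF aa_props(1)[OF mk]] by blast
  have "mP q (aa m) \<in> T m" using T_lmult[OF mk aa_props(2)[OF mk]] .
  then obtain W where W: "W \<in> V (m + 1)" "mS (U m) (emb (mP q (aa m))) + W \<in> It" by (auto simp: T_def)
  define r' where "r' = r(Suc m - i := \<rho>)"
  have sm: "{1..Suc m - i} = insert (Suc m - i) {1..m - i}" using step i by auto
  have sum_eq: "(\<Sum>t\<in>{1..Suc m - i}. mS (U (i - 1 + t)) (emb (r' t)))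
      = mS (U m) (emb \<rho>) + (\<Sum>t\<in>{1..m - i}. mS (U (i - 1 + t)) (emb (r t)))"
  proof -
    have "(\<Sum>t\<in>{1..Suc m - i}. mS (U (i - 1 + t)) (emb (r' t)))
        = mS (U (i - 1 + (Suc m - i))) (emb (r' (Suc m - i))) + (\<Sum>t\<in>{1..m - i}. mS (U (i - 1 + t)) (emb (r' t)))"
      unfolding sm by (rule sum.insert) auto
    moreover have "i - 1 + (Suc m - i) = m" using step i by auto
    moreover have "(\<Sum>t\<in>{1..m - i}. mS (U (i - 1 + t)) (emb (r' t))) = (\<Sum>t\<in>{1..m - i}. mS (U (i - 1 + t)) (emb (r t)))"
      by (rule sum.cong) (auto simp: r'_def)
    ultimately show ?thesis by (simp add: r'_def)
  qed
  have emb_split: "mS (U m) (emb (mP q (aa m))) = mS (U m) (emb z) - mS (U m) (emb \<rho>)"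
  proof -
    have "mP q (aa m) = z - \<rho>" using qr by simp
    then show ?thesis using mk by (simp add: emb_diff mS_diff_r emb_SC U_SC)
  qed
  define E where "E = mS (U (i - 1)) (emb (A i)) + (\<Sum>t\<in>{1..m - i}. mS (U (i - 1 + t)) (emb (r t))) + Z"
  have "E - (mS (U m) (emb (mP q (aa m))) + W)
     = mS (U (i - 1)) (emb (A i)) + (\<Sum>t\<in>{1..Suc m - i}. mS (U (i - 1 + t)) (emb (r' t))) + (Z' - W)"
    unfolding E_def sum_eq emb_split Z'_def by (simp add: algebra_simps)
  moreover have "E - (mS (U m) (emb (mP q (aa m))) + W) \<in> It" using It_diff rZ(2) W(2) by (simp add: E_def)
  moreover have "Z' - W \<in> V (Suc m)" using V_diff[OF Z' W(1)] by simp
  moreover have "\<forall>t\<in>{1..Suc m - i}. r' t = 0 \<or> degree (r' t) < degree (A (i + t))"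
  proof
    fix t assume t: "t \<in> {1..Suc m - i}"
    show "r' t = 0 \<or> degree (r' t) < degree (A (i + t))"
    proof (cases "t = Suc m - i")
      case True
      then have "A (i + t) = aa m" using step i by (simp add: A_def)
      then show ?thesis using True qr(2) by (simp add: r'_def)
    next
      case False
      then have "t \<in> {1..m - i}" using t by auto
      then show ?thesis using rZ(3) False by (simp add: r'_def)
    qed
  qed
  ultimately show ?case by (metis (no_types, lifting))
qed

end

context mctx
begin
lemma gen_poly_eq: "gen_poly k \<Theta> a r i = mS (U (i - 1)) (emb (a i)) + (\<Sum>t\<in>{1..k - i}. mS (U (i - 1 + t)) (emb (r i t)))"
  by (simp add: gen_poly_def multS U_def)

lemma mS_distr_l: "A \<in> sS.SC \<Longrightarrow> B \<in> sS.SC \<Longrightarrow> D \<in> sS.SC \<Longrightarrow> mS (A + B) D = mS A D + mS B D"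
  by (rule sS.skew_distr_l)
lemma mS_0_l: "D \<in> sS.SC \<Longrightarrow> mS 0 D = 0"
  using mS_distr_l[of 0 0 D] sS.SC_0 by (metis add.right_neutral add_left_cancel)

lemma tail_V:
  assumes i: "1 \<le> i" "i \<le> k"
  shows "(\<Sum>t\<in>{1..k - i}. mS (U (i - 1 + t)) (emb (r t))) \<in> V i"
proof (rule V_sum)
  fix t assume t: "t \<in> {1..k - i}"
  then have "mS (U (i - 1 + t)) (emb (r t)) \<in> V (i - 1 + t)" using i by (intro U_mult_S emb_SC) auto
  moreover have "V (i - 1 + t) \<subseteq> V i" using t i by (intro V_mono) auto
  ultimately show "mS (U (i - 1 + t)) (emb (r t)) \<in> V i" by blast
qed simp

lemma gen_SC: "1 \<le> i \<Longrightarrow> i \<le> k \<Longrightarrow> gen_poly k \<Theta> a r i \<in> sS.SC"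
  using tail_V[of i "r i"] by (auto simp: gen_poly_eq intro!: sS.SC_add sS.SC_mul U_SC emb_SC dest: V_SC)
end

context ictx
begin

definition rr :: "nat \<Rightarrow> nat \<Rightarrow> 'a poly" where
  "rr i = (SOME r. mS (U (i - 1)) (emb (A i)) + (\<Sum>t\<in>{1..k - i}. mS (U (i - 1 + t)) (emb (r t))) \<in> It
     \<and> (\<forall>t\<in>{1..k - i}. r t = 0 \<or> degree (r t) < degree (A (i + t))))"

lemma rr_props:
  assumes i: "1 \<le> i" "i \<le> k"
  shows "gen_poly k \<Theta> A rr i \<in> It" "\<And>t. t \<in> {1..k - i} \<Longrightarrow> rr i t = 0 \<or> degree (rr i t) < degree (A (i + t))"
proof -
  obtain r Z where "Z \<in> V k" "mS (U (i - 1)) (emb (A i)) + (\<Sum>t\<in>{1..k - i}. mS (U (i - 1 + t)) (emb (r t))) + Z \<in> It"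
     "\<forall>t\<in>{1..k - i}. r t = 0 \<or> degree (r t) < degree (A (i + t))"
    using RED[OF i(1) i(2) order.refl] by blast
  then have "\<exists>r. mS (U (i - 1)) (emb (A i)) + (\<Sum>t\<in>{1..k - i}. mS (U (i - 1 + t)) (emb (r t))) \<in> It
     \<and> (\<forall>t\<in>{1..k - i}. r t = 0 \<or> degree (r t) < degree (A (i + t)))" using V_k by auto
  then have "mS (U (i - 1)) (emb (A i)) + (\<Sum>t\<in>{1..k - i}. mS (U (i - 1 + t)) (emb (rr i t))) \<in> It
     \<and> (\<forall>t\<in>{1..k - i}. rr i t = 0 \<or> degree (rr i t) < degree (A (i + t)))"
    unfolding rr_def by (rule someI_ex)
  then show "gen_poly k \<Theta> A rr i \<in> It" "\<And>t. t \<in> {1..k - i} \<Longrightarrow> rr i t = 0 \<or> degree (rr i t) < degree (A (i + t))"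
    by (auto simp: gen_poly_eq)
qed

abbreviation "g \<equiv> gen_poly k \<Theta> A rr"

lemma span:
  assumes m: "m \<le> k" and X: "X \<in> It" "X \<in> V m"
  shows "\<exists>C. (\<forall>i\<in>{1..k}. C i \<in> sS.SC) \<and> X = (\<Sum>i\<in>{1..k}. mS (C i) (g i))"
  using m X
proof (induction "k - m" arbitrary: m X)
  case 0
  then have "m = k" by simp
  then have "X = 0" using 0 V_k by auto
  then show ?case using gen_SC by (intro exI[of _ "\<lambda>_. 0"]) (auto simp: sS.SC_0 mS_0_l)
next
  case (Suc n)
  then have mk: "m < k" by simp
  define z where "z = map_poly (\<lambda>c. coeff c m) X"
  define X' where "X' = X - mS (U m) (emb z)"
  have X': "X' \<in> V (m + 1)" unfolding X'_def z_def by (rule decomp[OF Suc.prems(3) mk])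
  have "z \<in> T m" unfolding T_def using X' Suc.prems(2) by (intro CollectI bexI[of _ X']) (auto simp: X'_def)
  then obtain q where q: "z = mP q (aa m)" using aa_props(3)[OF mk] by blast
  obtain B where B: "B \<in> sS.SC" "mS B (U m) = mS (U m) (emb q)" using TW_S[OF mk] by blast
  define tl where "tl = (\<Sum>t\<in>{1..k - Suc m}. mS (U (Suc m - 1 + t)) (emb (rr (Suc m) t)))"
  have tl: "tl \<in> V (Suc m)" unfolding tl_def using mk by (intro tail_V) auto
  have gm: "g (Suc m) = mS (U m) (emb (aa m)) + tl" by (simp add: gen_poly_eq tl_def A_def)
  have "mS B (g (Suc m)) = mS B (mS (U m) (emb (aa m))) + mS B tl"
    unfolding gm using B mk tl by (intro mS_distr_r) (auto intro: sS.SC_mul U_SC emb_SC V_SC)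
  also have "mS B (mS (U m) (emb (aa m))) = mS (mS B (U m)) (emb (aa m))"
    by (rule mS_assoc[symmetric]) (use B mk in \<open>auto simp: U_SC emb_SC\<close>)
  also have "\<dots> = mS (U m) (emb z)"
    using B mk by (simp add: mS_assoc U_SC emb_SC emb_mult q)
  finally have eB: "mS B (g (Suc m)) = mS (U m) (emb z) + mS B tl" .
  define Y where "Y = X - mS B (g (Suc m))"
  have Y1: "Y = X' - mS B tl" by (simp add: Y_def eB X'_def)
  have YV: "Y \<in> V (Suc m)" unfolding Y1 using X' V_lmult[OF B(1) tl] mk by (intro V_diff) auto
  have YI: "Y \<in> It" unfolding Y_def using Suc.prems(2) It_lmult[OF B(1) rr_props(1)[of "Suc m"]] mk by (intro It_diff) auto
  obtain C where C: "\<forall>i\<in>{1..k}. C i \<in> sS.SC" "Y = (\<Sum>i\<in>{1..k}. mS (C i) (g i))"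
  proof -
    have "n = k - Suc m" using Suc.hyps(2) by simp
    then show ?thesis using Suc.hyps(1)[of "Suc m" Y] mk YV YI that by auto
  qed
  define C' where "C' i = C i + (if i = Suc m then B else 0)" for i
  have "X = Y + mS B (g (Suc m))" by (simp add: Y_def)
  also have "\<dots> = (\<Sum>i\<in>{1..k}. mS (C i) (g i)) + (\<Sum>i\<in>{1..k}. if i = Suc m then mS B (g i) else 0)"
    using mk by (simp add: C(2))
  also have "\<dots> = (\<Sum>i\<in>{1..k}. mS (C' i) (g i))"
    unfolding sum.distrib[symmetric]
    by (rule sum.cong) (use C(1) B(1) gen_SC in \<open>auto simp: C'_def mS_distr_l sS.SC_0 mS_0_l\<close>)
  finally show ?case using C(1) B(1) by (intro exI[of _ C']) (auto simp: C'_def sS.SC_add sS.SC_0)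
qed

end

context ictx
begin

lemma small_diff:
  fixes x y :: "'b::ab_group_add poly"
  assumes "x = 0 \<or> degree x < D" "y = 0 \<or> degree y < D"
  shows "x - y = 0 \<or> degree (x - y) < (D::nat)"
proof (cases "D = 0")
  case True then show ?thesis using assms by auto
next
  case False
  then have "degree x < D" "degree y < D" using assms by auto
  then have "degree (x - y) < D" using degree_diff_le_max[of x y] by linarith
  then show ?thesis by blast
qed

lemma uniq:
  assumes gI: "\<And>i. i \<in> {1..k} \<Longrightarrow> gen_poly k \<Theta> A r' i \<in> It"
    and dc: "\<And>i t. i \<in> {1..k} \<Longrightarrow> t \<in> {1..k - i} \<Longrightarrow> r' i t = 0 \<or> degree (r' i t) < degree (A (i + t))"
    and i: "i \<in> {1..k}"
  shows "\<forall>t\<in>{1..k - i}. r' i t = rr i t"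
proof -
  define dif where "dif t = rr i t - r' i t" for t
  define f where "f s = mS (U (i - 1 + s)) (emb (dif s))" for s
  have fS: "s \<in> {1..k - i} \<Longrightarrow> mS (U (i - 1 + s)) (emb x) \<in> sS.SC" for s x
    using i by (intro sS.SC_mul U_SC emb_SC) auto
  have D: "g i - gen_poly k \<Theta> A r' i = (\<Sum>s\<in>{1..k - i}. f s)"
  proof -
    have "(\<Sum>s\<in>{1..k - i}. f s) = (\<Sum>s\<in>{1..k - i}. mS (U (i - 1 + s)) (emb (rr i s)) - mS (U (i - 1 + s)) (emb (r' i s)))"
      by (rule sum.cong) (use i in \<open>auto simp: f_def dif_def emb_diff mS_diff_r emb_SC U_SC\<close>)
    then show ?thesis by (simp add: gen_poly_eq sum_subtractf)
  qed
  have "g i - gen_poly k \<Theta> A r' i \<in> It" using i by (intro It_diff rr_props(1) gI) auto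
  then have DI: "(\<Sum>s\<in>{1..k - i}. f s) \<in> It" using D by simp
  have "\<forall>s\<in>{1..t}. dif s = 0" if "t \<le> k - i" for t
    using that
  proof (induction t)
    case 0 then show ?case by simp
  next
    case (Suc t)
    then have IH: "\<forall>s\<in>{1..t}. dif s = 0" by simp
    define w where "w = i + t"
    have wk: "w < k" using Suc.prems i by (simp add: w_def)
    have f0: "f s = 0" if "s \<in> {1..t}" for s
    proof -
      have "i - 1 + s < k" using that Suc.prems i by auto
      then show ?thesis using IH that by (simp add: f_def emb_0 mS_0_r U_SC)
    qed
    have "(\<Sum>s\<in>{1..k - i}. f s) = (\<Sum>s\<in>{Suc t..k - i}. f s)"
      by (rule sum.mono_neutral_right) (auto simp: f0)
    also have "\<dots> = f (Suc t) + (\<Sum>s\<in>{Suc (Suc t)..k - i}. f s)"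
      using Suc.prems by (rule sum.atLeast_Suc_atMost)
    finally have Dsplit: "(\<Sum>s\<in>{1..k - i}. f s) = mS (U w) (emb (dif (Suc t))) + (\<Sum>s\<in>{Suc (Suc t)..k - i}. f s)"
      using i by (simp add: f_def w_def)
    have "(\<Sum>s\<in>{Suc (Suc t)..k - i}. f s) \<in> V (w + 1)"
    proof (rule V_sum)
      fix s assume s: "s \<in> {Suc (Suc t)..k - i}"
      then have "f s \<in> V (i - 1 + s)" unfolding f_def using i by (intro U_mult_S emb_SC) auto
      moreover have "V (i - 1 + s) \<subseteq> V (w + 1)" using s i by (intro V_mono) (auto simp: w_def)
      ultimately show "f s \<in> V (w + 1)" by blast
    qed simp
    then have "dif (Suc t) \<in> T w" using DI Dsplit by (auto simp: T_def)
    moreover have "dif (Suc t) = 0 \<or> degree (dif (Suc t)) < degree (aa w)"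
    proof -
      have t1: "Suc t \<in> {1..k - i}" using Suc.prems by simp
      have "A (i + Suc t) = aa w" by (simp add: A_def w_def)
      then show ?thesis unfolding dif_def using small_diff rr_props(2)[of i "Suc t"] dc[OF i t1] i t1 by auto
    qed
    ultimately have "dif (Suc t) = 0" using small_in_T[OF wk] by blast
    then show ?case using IH by (auto simp: le_Suc_eq)
  qed
  then show ?thesis by (auto simp: dif_def)
qed

end

context ictx
begin

lemma carrierQ: "carrier Q = (\<Union>x\<in>carrier S. {J +>\<^bsub>S\<^esub> x})"
  by (auto simp: FactRing_def A_RCOSETS_def RCOSETS_def a_r_coset_def)

lemma zeroQ: "\<zero>\<^bsub>Q\<^esub> = J" by (simp add: FactRing_def)

lemma hom_finsum:
  "finite B \<Longrightarrow> (\<And>i. i \<in> B \<Longrightarrow> f i \<in> carrier S) \<Longrightarrow>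
    J +>\<^bsub>S\<^esub> (finsum S f B) = finsum Q (\<lambda>i. J +>\<^bsub>S\<^esub> f i) B"
proof (induction B rule: finite_induct)
  case empty
  interpret r: ring S by (rule ringS)
  interpret q: ring Q by (rule Q_ring)
  show ?case using J_rcos0 r.finsum_empty q.finsum_empty zeroQ by (simp add: zeroS)
next
  case (insert x F)
  interpret r: ring S by (rule ringS)
  interpret q: ring Q by (rule Q_ring)
  have fc: "f \<in> F \<rightarrow> carrier S" "f x \<in> carrier S" using insert by auto
  have hc: "(\<lambda>i. J +>\<^bsub>S\<^esub> f i) \<in> F \<rightarrow> carrier Q" "J +>\<^bsub>S\<^esub> f x \<in> carrier Q"
    using ring_hom_closed[OF hom] insert by auto
  have "J +>\<^bsub>S\<^esub> (finsum S f (insert x F)) = J +>\<^bsub>S\<^esub> (f x \<oplus>\<^bsub>S\<^esub> finsum S f F)"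
    using r.finsum_insert[OF insert(1,2) fc(1) fc(2)] by simp
  also have "\<dots> = (J +>\<^bsub>S\<^esub> f x) \<oplus>\<^bsub>Q\<^esub> (J +>\<^bsub>S\<^esub> finsum S f F)"
    using ring_hom_add[OF hom] fc r.finsum_closed by blast
  also have "\<dots> = finsum Q (\<lambda>i. J +>\<^bsub>S\<^esub> f i) (insert x F)"
    using q.finsum_insert[OF insert(1,2) hc(1) hc(2)] insert by simp
  finally show ?case .
qed

lemma left_gen_eq:
  assumes G: "\<And>i. i \<in> {1..k} \<Longrightarrow> G i \<in> It"
    and sp: "\<And>X. X \<in> It \<Longrightarrow> \<exists>C. (\<forall>i\<in>{1..k}. C i \<in> sS.SC) \<and> X = (\<Sum>i\<in>{1..k}. mS (C i) (G i))"
  shows "I = left_gen Q (\<lambda>i. J +>\<^bsub>S\<^esub> G i) {1..k}"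
proof
  interpret q: ring Q by (rule Q_ring)
  show "I \<subseteq> left_gen Q (\<lambda>i. J +>\<^bsub>S\<^esub> G i) {1..k}"
  proof
    fix \<kappa> assume \<kappa>: "\<kappa> \<in> I"
    then have "\<kappa> \<in> carrier Q" using additive_subgroup.a_subset[OF I_sub] by blast
    then obtain X where X: "X \<in> carrier S" "\<kappa> = J +>\<^bsub>S\<^esub> X" by (auto simp: carrierQ)
    then have "X \<in> It" using \<kappa> by (simp add: It_def)
    then obtain C where C: "\<forall>i\<in>{1..k}. C i \<in> sS.SC" "X = (\<Sum>i\<in>{1..k}. mS (C i) (G i))" using sp by blast
    have GS: "G i \<in> carrier S" if "i \<in> {1..k}" for i using G[OF that] by (simp add: It_def)
    have CG: "mS (C i) (G i) \<in> carrier S" if "i \<in> {1..k}" for i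
      using C(1) GS that by (simp add: carrierS sS.SC_mul)
    have "X = finsum S (\<lambda>i. mS (C i) (G i)) {1..k}" using C(2) finsum_S[of "{1..k}" "\<lambda>i. mS (C i) (G i)"] CG by simp
    then have "\<kappa> = finsum Q (\<lambda>i. J +>\<^bsub>S\<^esub> mS (C i) (G i)) {1..k}"
      using X(2) hom_finsum[of "{1..k}" "\<lambda>i. mS (C i) (G i)"] CG by simp
    also have "\<dots> = finsum Q (\<lambda>i. (J +>\<^bsub>S\<^esub> C i) \<otimes>\<^bsub>Q\<^esub> (J +>\<^bsub>S\<^esub> G i)) {1..k}"
    proof (rule q.finsum_cong')
      show "(\<lambda>i. (J +>\<^bsub>S\<^esub> C i) \<otimes>\<^bsub>Q\<^esub> (J +>\<^bsub>S\<^esub> G i)) \<in> {1..k} \<rightarrow> carrier Q"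
        using ring_hom_closed[OF hom] C(1) GS by (auto simp: carrierS)
      show "J +>\<^bsub>S\<^esub> mS (C i) (G i) = (J +>\<^bsub>S\<^esub> C i) \<otimes>\<^bsub>Q\<^esub> (J +>\<^bsub>S\<^esub> G i)" if "i \<in> {1..k}" for i
        using ring_hom_mult[OF hom, of "C i" "G i"] C(1) GS that by (simp add: carrierS multS)
    qed simp
    finally show "\<kappa> \<in> left_gen Q (\<lambda>i. J +>\<^bsub>S\<^esub> G i) {1..k}"
      unfolding left_gen_def using ring_hom_closed[OF hom] C(1) by (auto simp: carrierS intro!: exI[of _ "\<lambda>i. J +>\<^bsub>S\<^esub> C i"])
  qed
  show "left_gen Q (\<lambda>i. J +>\<^bsub>S\<^esub> G i) {1..k} \<subseteq> I"
  proof
    fix \<kappa> assume "\<kappa> \<in> left_gen Q (\<lambda>i. J +>\<^bsub>S\<^esub> G i) {1..k}"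
    then obtain c where c: "c \<in> {1..k} \<rightarrow> carrier Q" "\<kappa> = finsum Q (\<lambda>i. c i \<otimes>\<^bsub>Q\<^esub> (J +>\<^bsub>S\<^esub> G i)) {1..k}"
      by (auto simp: left_gen_def)
    have "\<forall>i\<in>{1..k}. \<exists>Ci. Ci \<in> carrier S \<and> c i = J +>\<^bsub>S\<^esub> Ci" using c(1) by (auto simp: carrierQ)
    then obtain C where C: "\<And>i. i \<in> {1..k} \<Longrightarrow> C i \<in> carrier S \<and> c i = J +>\<^bsub>S\<^esub> C i" by metis
    have GS: "G i \<in> carrier S" if "i \<in> {1..k}" for i using G[OF that] by (simp add: It_def)
    have CG: "mS (C i) (G i) \<in> carrier S" if "i \<in> {1..k}" for i
      using C GS that by (simp add: carrierS sS.SC_mul)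
    have "\<kappa> = finsum Q (\<lambda>i. J +>\<^bsub>S\<^esub> mS (C i) (G i)) {1..k}"
      unfolding c(2)
    proof (rule q.finsum_cong')
      show "(\<lambda>i. J +>\<^bsub>S\<^esub> mS (C i) (G i)) \<in> {1..k} \<rightarrow> carrier Q"
        using ring_hom_closed[OF hom] CG by auto
      show "c i \<otimes>\<^bsub>Q\<^esub> (J +>\<^bsub>S\<^esub> G i) = J +>\<^bsub>S\<^esub> mS (C i) (G i)" if "i \<in> {1..k}" for i
        using ring_hom_mult[OF hom, of "C i" "G i"] C GS that by (simp add: multS)
    qed simp
    also have "\<dots> = J +>\<^bsub>S\<^esub> (\<Sum>i\<in>{1..k}. mS (C i) (G i))"
      using finsum_S[of "{1..k}" "\<lambda>i. mS (C i) (G i)"] hom_finsum[of "{1..k}" "\<lambda>i. mS (C i) (G i)"] CG by simp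
    finally have "\<kappa> = J +>\<^bsub>S\<^esub> (\<Sum>i\<in>{1..k}. mS (C i) (G i))" .
    moreover have "(\<Sum>i\<in>{1..k}. mS (C i) (G i)) \<in> It"
      using C G by (intro It_sum It_lmult) (auto simp: carrierS)
    ultimately show "\<kappa> \<in> I" by (simp add: It_def)
  qed
qed

lemma left_gen_mem:
  assumes Ieq: "I = left_gen Q (\<lambda>i. J +>\<^bsub>S\<^esub> G i) {1..k}"
    and GS: "\<And>i. i \<in> {1..k} \<Longrightarrow> G i \<in> carrier S"
    and i: "i \<in> {1..k}"
  shows "G i \<in> It"
proof -
  interpret q: ring Q by (rule Q_ring)
  define c where "c j = (if j = i then \<one>\<^bsub>Q\<^esub> else \<zero>\<^bsub>Q\<^esub>)" for j
  have hc: "J +>\<^bsub>S\<^esub> G j \<in> carrier Q" if "j \<in> {1..k}" for j using ring_hom_closed[OF hom] GS[OF that] by auto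
  have "finsum Q (\<lambda>j. c j \<otimes>\<^bsub>Q\<^esub> (J +>\<^bsub>S\<^esub> G j)) {1..k}
      = finsum Q (\<lambda>j. if j = i then J +>\<^bsub>S\<^esub> G j else \<zero>\<^bsub>Q\<^esub>) {1..k}"
    by (rule q.finsum_cong') (auto simp: c_def hc)
  also have "\<dots> = J +>\<^bsub>S\<^esub> G i"
    using q.add.finprod_singleton_swap[of i "{1..k}" "\<lambda>j. J +>\<^bsub>S\<^esub> G j"] i hc by auto
  finally have "J +>\<^bsub>S\<^esub> G i \<in> left_gen Q (\<lambda>i. J +>\<^bsub>S\<^esub> G i) {1..k}"
    unfolding left_gen_def by (intro CollectI exI[of _ c]) (auto simp: c_def)
  then have "J +>\<^bsub>S\<^esub> G i \<in> I" by (simp add: Ieq)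
  then show ?thesis using GS[OF i] by (simp add: It_def)
qed

lemma T_mono_le: "w \<le> v \<Longrightarrow> v < k \<Longrightarrow> T w \<subseteq> T v"
proof (induction v rule: dec_induct)
  case (step v)
  then show ?case using T_mono[of v] by auto
qed simp

end

context mctx
begin
lemma pow_props:
  assumes f: "f \<in> sS.SC" and lf: "lead_coeff f = 1"
  shows "f [^]\<^bsub>S\<^esub> n \<in> sS.SC \<and> lead_coeff (f [^]\<^bsub>S\<^esub> n) = 1 \<and> degree (f [^]\<^bsub>S\<^esub> n) = n * degree f"
proof (induction n)
  case 0
  interpret r: ring S by (rule ringS)
  show ?case using sS.SC_1 by (simp add: oneS)
next
  case (Suc n)
  interpret r: ring S by (rule ringS)
  have e: "f [^]\<^bsub>S\<^esub> Suc n = mS (f [^]\<^bsub>S\<^esub> n) f" by (simp add: multS)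
  have nz: "rk_mult k (lead_coeff (f [^]\<^bsub>S\<^esub> n)) ((\<Theta>^^degree (f [^]\<^bsub>S\<^esub> n)) (lead_coeff f)) = 1"
  proof -
    have l: "lead_coeff (f [^]\<^bsub>S\<^esub> n) = 1" using Suc by blast
    have r11: "rk_mult k 1 1 = (1 :: 'a poly)" using k1 by (simp add: rk_mult_1)
    show ?thesis using l lf sS.\<sigma>p_one[of "degree (f [^]\<^bsub>S\<^esub> n)"] r11 by metis
  qed
  show ?case using sS.degree_skew_eq[of "f [^]\<^bsub>S\<^esub> n" f] Suc f nz e sS.SC_mul by simp
qed
end

theorem theorem3p2:
  fixes p m k n s l j :: nat
    and \<Theta> :: "'a::{field, finite} poly \<Rightarrow> 'a poly"
    and \<theta> :: "'a \<Rightarrow> 'a"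
    and lam :: "'a poly"
    and f :: "'a poly poly"
    and I :: "'a poly poly set set"
  assumes "prime p" and "odd p"
    and "m \<ge> 1" and "k \<ge> 1" and "n \<ge> 1" and "s \<ge> 1"
    and "coprime n p"
    and "card (UNIV :: 'a set) = p ^ m"
    and "\<Theta> \<in> ring_iso (Rk k) (Rk k)"
    and "\<forall>a \<in> carrier (Rk k). (\<Theta> ^^ (n * p ^ s)) a = a"
    and "\<forall>c. \<Theta> [:c:] = [:\<theta> c:]"
    and "lam \<in> Units (Rk k)" and "\<Theta> lam = lam"
    and "f \<in> carrier (skewRk k \<Theta>)" and "lead_coeff f = 1"
    and "skew_irreducible (skewRk k \<Theta>) f"
    and "rdvd (skewRk k \<Theta>) f (monom 1 (n * p ^ s) - [:lam:])"
    and "degree f = l"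
    and "j \<ge> 1"
    and "central (skewRk k \<Theta>) (f [^]\<^bsub>skewRk k \<Theta>\<^esub> j)"
    and "rdvd (skewRk k \<Theta>) (f [^]\<^bsub>skewRk k \<Theta>\<^esub> j) (monom 1 (n * p ^ s) - [:lam:])"
    and "left_ideal I (skewRk k \<Theta> Quot (Idl\<^bsub>skewRk k \<Theta>\<^esub> {f [^]\<^bsub>skewRk k \<Theta>\<^esub> j}))"
  shows "\<exists>a r.
    rep_conds k \<theta> (f [^]\<^bsub>skewRk k \<Theta>\<^esub> j) l j a r \<and>
    I = left_gen (skewRk k \<Theta> Quot (Idl\<^bsub>skewRk k \<Theta>\<^esub> {f [^]\<^bsub>skewRk k \<Theta>\<^esub> j}))
          (\<lambda>i. (Idl\<^bsub>skewRk k \<Theta>\<^esub> {f [^]\<^bsub>skewRk k \<Theta>\<^esub> j}) +>\<^bsub>skewRk k \<Theta>\<^esub> gen_poly k \<Theta> a r i) {1..k} \<and>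
    (\<forall>r'. rep_conds k \<theta> (f [^]\<^bsub>skewRk k \<Theta>\<^esub> j) l j a r' \<and>
          I = left_gen (skewRk k \<Theta> Quot (Idl\<^bsub>skewRk k \<Theta>\<^esub> {f [^]\<^bsub>skewRk k \<Theta>\<^esub> j}))
                (\<lambda>i. (Idl\<^bsub>skewRk k \<Theta>\<^esub> {f [^]\<^bsub>skewRk k \<Theta>\<^esub> j}) +>\<^bsub>skewRk k \<Theta>\<^esub> gen_poly k \<Theta> a r' i) {1..k}
       \<longrightarrow> (\<forall>i\<in>{1..k}. \<forall>t\<in>{1..k - i}. r' i t = r i t))"
proof -
  note a = assms
  interpret m: mctx k \<Theta> \<theta> by unfold_locales (use assms in auto)
  let ?S = "skewRk k \<Theta>"
  let ?F0 = "f [^]\<^bsub>?S\<^esub> j"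
  have fS: "f \<in> m.sS.SC" using assms(14) by (simp add: m.carrierS)
  have pp: "?F0 \<in> m.sS.SC" "lead_coeff ?F0 = 1" "degree ?F0 = j * l"
    using m.pow_props[OF fS assms(15), of j] assms(18) by auto
  have l1: "l \<ge> 1"
  proof (rule ccontr)
    assume "\<not> l \<ge> 1"
    then have "degree f = 0" using assms(18) by simp
    then have "f = 1" using assms(15) by (metis degree_0_id one_pCons)
    moreover have "\<one>\<^bsub>?S\<^esub> \<in> Units ?S" using monoid.Units_one_closed ring.axioms(2)[OF m.ringS] by blast
    ultimately show False using assms(16) by (simp add: skew_irreducible_def m.oneS)
  qed
  have N1: "l * j \<ge> 1" using l1 assms(19) by simp
  interpret i: ictx k \<Theta> \<theta> ?F0 I "l * j"
    by unfold_locales (use pp N1 assms(22) in \<open>auto simp: m.carrierS mult.commute\<close>)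
  have Aprops: "lead_coeff (i.A ii) = 1" "i.A ii \<in> i.T (ii - 1)" "i.A ii \<noteq> 0" if "ii \<in> {1..k}" for ii
  proof -
    have w: "ii - 1 < k" using that by auto
    show "lead_coeff (i.A ii) = 1" "i.A ii \<in> i.T (ii - 1)" "i.A ii \<noteq> 0"
      using i.aa_props(1,2)[OF w] i.aa_nz[OF w] by (simp_all add: i.A_def)
  qed
  have rc: "rep_conds k \<theta> ?F0 l j i.A i.rr"
    unfolding rep_conds_def
  proof (intro conjI ballI impI)
    fix ii assume ii: "ii \<in> {1..k}"
    have w: "ii - 1 < k" using ii by auto
    obtain q where "mu ?F0 = skew_mult (*) \<theta> q (i.A ii)"
      using i.aa_props(3)[OF w i.M_T[OF w]] by (auto simp: i.A_def)
    then show "i.A ii = 0 \<or> lead_coeff (i.A ii) = 1 \<and> rdvd (skewF \<theta>) (i.A ii) (mu ?F0)"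
      using Aprops(1)[OF ii] by (auto simp: rdvd_def m.carrierP m.multP)
  next
    fix ii assume ii: "ii \<in> {1..k - 1}"
    have h1: "ii \<in> {1..k}" "ii - 1 \<le> k - 1" "k - 1 < k" using ii m.k1 by auto
    have "i.A ii \<in> i.T (k - 1)" using Aprops(2)[OF h1(1)] i.T_mono_le[OF h1(2,3)] by blast
    then obtain q where "i.A ii = skew_mult (*) \<theta> q (i.aa (k - 1))" using i.aa_props(3)[OF h1(3)] by blast
    then show "rdvd (skewF \<theta>) (i.A k) (i.A ii)" by (auto simp: rdvd_def m.carrierP m.multP i.A_def)
  next
    fix ii t assume ii: "ii \<in> {1..k}" and t: "t \<in> {1..k - ii}"
    have w: "ii + t - 1 < k" using ii t by auto
    have "degree (i.A (ii + t)) \<le> l * j" using i.aa_deg[OF w] by (simp add: i.A_def)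
    moreover have "ii \<ge> 1" "ii \<le> k" using ii by auto
    ultimately show "degree (i.rr ii t) < l * j" using i.rr_props(2)[of ii t] t N1 by fastforce
  next
    fix ii t assume ii: "ii \<in> {2..k}" and t: "t \<in> {1..ii - 1}"
    have h: "1 \<le> t" "t \<le> k" "ii - t \<in> {1..k - t}" "t + (ii - t) = ii" using ii t by auto
    show "i.rr t (ii - t) = 0 \<or> degree (i.rr t (ii - t)) < degree (i.A ii)"
      using i.rr_props(2)[OF h(1) h(2) h(3)] h(4) by simp
  qed
  have gen_It: "gen_poly k \<Theta> i.A i.rr ii \<in> i.It" if "ii \<in> {1..k}" for ii
    using i.rr_props(1)[of ii] that by auto
  have Ieq: "I = left_gen (?S Quot (Idl\<^bsub>?S\<^esub> {?F0})) (\<lambda>ii. (Idl\<^bsub>?S\<^esub> {?F0}) +>\<^bsub>?S\<^esub> gen_poly k \<Theta> i.A i.rr ii) {1..k}"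
  proof (rule i.left_gen_eq)
    show "gen_poly k \<Theta> i.A i.rr ii \<in> i.It" if "ii \<in> {1..k}" for ii using gen_It that .
    show "\<exists>C. (\<forall>ii\<in>{1..k}. C ii \<in> m.sS.SC) \<and> X = (\<Sum>ii\<in>{1..k}. m.mS (C ii) (gen_poly k \<Theta> i.A i.rr ii))"
      if "X \<in> i.It" for X
      using i.span[of 0 X] that i.It_S[OF that] by (simp add: m.V_0)
  qed
  show ?thesis
  proof (intro exI[of _ i.A] exI[of _ i.rr] conjI allI impI rc Ieq)
    fix r' assume H: "rep_conds k \<theta> ?F0 l j i.A r' \<and>
       I = left_gen (?S Quot (Idl\<^bsub>?S\<^esub> {?F0})) (\<lambda>ii. (Idl\<^bsub>?S\<^esub> {?F0}) +>\<^bsub>?S\<^esub> gen_poly k \<Theta> i.A r' ii) {1..k}"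
    have gI: "gen_poly k \<Theta> i.A r' ii \<in> i.It" if "ii \<in> {1..k}" for ii
    proof (rule i.left_gen_mem[of "\<lambda>ii. gen_poly k \<Theta> i.A r' ii"])
      show "I = left_gen (?S Quot (Idl\<^bsub>?S\<^esub> {?F0})) (\<lambda>ii. (Idl\<^bsub>?S\<^esub> {?F0}) +>\<^bsub>?S\<^esub> gen_poly k \<Theta> i.A r' ii) {1..k}"
        using H by blast
      show "gen_poly k \<Theta> i.A r' ii \<in> carrier ?S" if "ii \<in> {1..k}" for ii
        using m.gen_SC[of ii] that by (auto simp: m.carrierS)
    qed (rule that)
    have dc: "r' ii t = 0 \<or> degree (r' ii t) < degree (i.A (ii + t))" if "ii \<in> {1..k}" "t \<in> {1..k - ii}" for ii t
    proof -
      have h: "ii + t \<in> {2..k}" "ii + t \<in> {1..k}" "ii \<in> {1..ii + t - 1}" "ii + t - ii = t" using that by auto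
      have "\<forall>i\<in>{2..k}. i.A i \<noteq> 0 \<longrightarrow> (\<forall>t\<in>{1..i - 1}. r' t (i - t) = 0 \<or> degree (r' t (i - t)) < degree (i.A i))"
        using H unfolding rep_conds_def by blast
      then have "\<forall>t'\<in>{1..ii + t - 1}. r' t' (ii + t - t') = 0 \<or> degree (r' t' (ii + t - t')) < degree (i.A (ii + t))"
        using h(1) Aprops(3)[OF h(2)] by blast
      then show ?thesis using h(3) h(4) by (metis (no_types, lifting))
    qed
    show "\<forall>ii\<in>{1..k}. \<forall>t\<in>{1..k - ii}. r' ii t = i.rr ii t"
      using i.uniq[OF gI dc] by blast
  qed
qed
end
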